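(* Let $\epsilon>0$ and let $C^*$ be the minimum cost of a valid flow for the generalized network flow instance at time $T$ with all edge capacities $\mu_e$ replaced by $\mu_e/(1+\epsilon)$. Then the final heights produced by the augmenting-path algorithm (run with the original capacities $\mu$) satisfy $\sum_{t=1}^{T}\mathrm{height}_T(s_t)\le\frac{1+\epsilon}{\epsilon}C^*$.
   Context: Generalized network flow instance: digraph $G=(V,E)$ without anti-parallel edges, sources with no incoming edges, sink $\tau$ with no outgoing edges, edge capacities $\mu_e>0$, costs $c_e>0$, gains $\gamma_e>0$; convention: every vertex $v\ne\tau$ has a dummy edge $v\tau$ of infinite capacity, gain $1$ and sufficiently large cost $B$. A valid flow $x\ge0$ satisfies $x_e\le\mu_e$ and $\sum_{e\in\delta^+(v)}x_e-\sum_{e\in\delta^-(v)}\gamma_ex_e=a_v$ for all $v\ne\tau$, where $a_v=1$ for sources and $0$ otherwise; its cost is $\sum_ec_ex_e$. Online: sources $s_1,\dots,s_T$ arrive one at a time with their outgoing edges. Residual graph $G^x$: forward edge $uv$ (capacity $\mu_{uv}-x_{uv}$, cost $c_{uv}$, gain $\gamma_{uv}$) if $x_{uv}<\mu_{uv}$; backward edge $vu$ (capacity $\gamma_{uv}x_{uv}$, cost $0$, gain $1/\gamma_{uv}$) if $x_{uv}>0$. A fractional augmenting path from $s\ne\tau$ in $G^x$ is $f\ge0$ on residual edges with out-minus-gain-weighted-in flow $1$ at $s$ and $0$ at vertices other than $s,\tau$; cost $\sum_ec^x_ef_e$. It is an augmenting path if its support is a path from $s$ to $\tau$, or a cycle through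 $s$ avoiding $\tau$, or a cycle avoiding $s,\tau$ plus a path from $s$ to it internally disjoint from it. Augmenting $x$ by $\theta$ using $f$: $x_{uv}\gets x_{uv}+\theta f_{uv}$ on forward residual edges, $x_{uv}\gets x_{uv}-\theta f_{vu}/\gamma_{uv}$ on backward residual edges $vu$. The augmenting-path algorithm: $x^{(0)}=0$; at time $t$, add $s_t$, start from $x^{(t-1)}$ (zero on new edges), and while the outflow of $s_t$ is less than $1$, augment by the largest feasible $\theta$ (keeping $0\le x_e\le\mu_e$ and outflow of $s_t$ at most $1$) along a cheapest augmenting path from $s_t$ in the current residual graph; the result is $x^{(t)}$. $\mathrm{height}_T(v)$ for $v\ne\tau$ is the minimum cost of an augmenting path from $v$ in $G^{x^{(T)}}$. *)

theory Defs
  imports "HOL-Analysis.Analysis" "HOL-Library.Extended_Real"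
begin

(* A generalized network flow instance (final graph, i.e. at time T).
   Edges are abstract indices with tail/head maps, so that a dummy edge v->tau may
   coexist with an original edge v->tau. Capacities are extended reals (dummy edges
   have capacity infinity). *)
record ('v,'e) gnf =
  verts   :: "'v set"
  edges   :: "'e set"
  etail   :: "'e \<Rightarrow> 'v"
  ehead   :: "'e \<Rightarrow> 'v"
  sink    :: "'v"
  cap     :: "'e \<Rightarrow> ereal"
  cst     :: "'e \<Rightarrow> real"
  gain    :: "'e \<Rightarrow> real"
  src     :: "nat \<Rightarrow> 'v"
  horizon :: nat

definition gnf_instance :: "('v,'e) gnf \<Rightarrow> real \<Rightarrow> ('v \<Rightarrow> 'e) \<Rightarrow> bool" where
  "gnf_instance I B dummy \<longleftrightarrow>
     finite (verts I) \<and> finite (edges I) \<and> sink I \<in> verts I \<and>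
     (\<forall>e\<in>edges I. etail I e \<in> verts I \<and> ehead I e \<in> verts I) \<and>
     \<comment> \<open>no anti-parallel edges (in particular no loops)\<close>
     (\<forall>e\<in>edges I. \<forall>e'\<in>edges I. \<not> (etail I e = ehead I e' \<and> ehead I e = etail I e')) \<and>
     \<comment> \<open>the original graph is a simple digraph: only dummy edges may be parallel to others\<close>
     inj_on (\<lambda>e. (etail I e, ehead I e)) (edges I - dummy ` (verts I - {sink I})) \<and>
     \<comment> \<open>sink has no outgoing edges\<close>
     (\<forall>e\<in>edges I. etail I e \<noteq> sink I) \<and>
     \<comment> \<open>sources s_1..s_T: distinct vertices with no incoming edges\<close>
     inj_on (src I) {1..horizon I} \<and>
     (\<forall>t\<in>{1..horizon I}. src I t \<in> verts I \<and> src I t \<noteq> sink I \<and>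
         (\<forall>e\<in>edges I. ehead I e \<noteq> src I t)) \<and>
     \<comment> \<open>positive capacities, costs and gains\<close>
     (\<forall>e\<in>edges I. cap I e > 0 \<and> cst I e > 0 \<and> gain I e > 0) \<and>
     \<comment> \<open>dummy edges\<close>
     B > 0 \<and>
     (\<forall>v\<in>verts I - {sink I}. dummy v \<in> edges I \<and> etail I (dummy v) = v \<and>
         ehead I (dummy v) = sink I \<and> cap I (dummy v) = \<infinity> \<and>
         gain I (dummy v) = 1 \<and> cst I (dummy v) = B) \<and>
     (\<forall>e\<in>edges I - dummy ` (verts I - {sink I}). cap I e \<noteq> \<infinity>)"

definition verts_at :: "('v,'e) gnf \<Rightarrow> nat \<Rightarrow> 'v set" where
  "verts_at I t = verts I - src I ` {t<..horizon I}"

definition edges_at :: "('v,'e) gnf \<Rightarrow> nat \<Rightarrow> 'e set" where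
  "edges_at I t = {e \<in> edges I. etail I e \<notin> src I ` {t<..horizon I}}"

definition demand :: "('v,'e) gnf \<Rightarrow> nat \<Rightarrow> 'v \<Rightarrow> real" where
  "demand I t v = (if v \<in> src I ` {1..t} then 1 else 0)"

definition excess :: "('v,'e) gnf \<Rightarrow> nat \<Rightarrow> ('e \<Rightarrow> real) \<Rightarrow> 'v \<Rightarrow> real" where
  "excess I t x v = (\<Sum>e\<in>{e\<in>edges_at I t. etail I e = v}. x e)
                   - (\<Sum>e\<in>{e\<in>edges_at I t. ehead I e = v}. gain I e * x e)"

definition outflow :: "('v,'e) gnf \<Rightarrow> nat \<Rightarrow> ('e \<Rightarrow> real) \<Rightarrow> 'v \<Rightarrow> real" where
  "outflow I t x v = (\<Sum>e\<in>{e\<in>edges_at I t. etail I e = v}. x e)"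

definition valid_flow :: "('v,'e) gnf \<Rightarrow> nat \<Rightarrow> ('e \<Rightarrow> ereal) \<Rightarrow> ('e \<Rightarrow> real) \<Rightarrow> bool" where
  "valid_flow I t m x \<longleftrightarrow>
     (\<forall>e\<in>edges_at I t. 0 \<le> x e \<and> ereal (x e) \<le> m e) \<and>
     (\<forall>v\<in>verts_at I t - {sink I}. excess I t x v = demand I t v)"

definition flow_cost :: "('v,'e) gnf \<Rightarrow> nat \<Rightarrow> ('e \<Rightarrow> real) \<Rightarrow> real" where
  "flow_cost I t x = (\<Sum>e\<in>edges_at I t. cst I e * x e)"

definition min_flow_cost :: "('v,'e) gnf \<Rightarrow> nat \<Rightarrow> ('e \<Rightarrow> ereal) \<Rightarrow> real" where
  "min_flow_cost I t m = Inf (flow_cost I t ` {x. valid_flow I t m x})"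

datatype 'e arc = Fw 'e | Bw 'e

fun atail :: "('v,'e) gnf \<Rightarrow> 'e arc \<Rightarrow> 'v" where
  "atail I (Fw e) = etail I e"
| "atail I (Bw e) = ehead I e"

fun ahead :: "('v,'e) gnf \<Rightarrow> 'e arc \<Rightarrow> 'v" where
  "ahead I (Fw e) = ehead I e"
| "ahead I (Bw e) = etail I e"

fun arc_cost :: "('v,'e) gnf \<Rightarrow> 'e arc \<Rightarrow> real" where
  "arc_cost I (Fw e) = cst I e"
| "arc_cost I (Bw e) = 0"

fun arc_gain :: "('v,'e) gnf \<Rightarrow> 'e arc \<Rightarrow> real" where
  "arc_gain I (Fw e) = gain I e"
| "arc_gain I (Bw e) = 1 / gain I e"

definition all_arcs :: "('v,'e) gnf \<Rightarrow> nat \<Rightarrow> 'e arc set" where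
  "all_arcs I t = Fw ` edges_at I t \<union> Bw ` edges_at I t"

definition res_arcs :: "('v,'e) gnf \<Rightarrow> nat \<Rightarrow> ('e \<Rightarrow> real) \<Rightarrow> 'e arc set" where
  "res_arcs I t x = {Fw e | e. e \<in> edges_at I t \<and> ereal (x e) < cap I e}
                  \<union> {Bw e | e. e \<in> edges_at I t \<and> x e > 0}"

definition frac_aug :: "('v,'e) gnf \<Rightarrow> nat \<Rightarrow> ('e \<Rightarrow> real) \<Rightarrow> 'v \<Rightarrow> ('e arc \<Rightarrow> real) \<Rightarrow> bool" where
  "frac_aug I t x u f \<longleftrightarrow>
     (\<forall>a. f a \<ge> 0) \<and> (\<forall>a. f a \<noteq> 0 \<longrightarrow> a \<in> res_arcs I t x) \<and>
     (\<forall>w\<in>verts_at I t - {sink I}.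
        (\<Sum>a\<in>{a\<in>all_arcs I t. atail I a = w}. f a)
        - (\<Sum>a\<in>{a\<in>all_arcs I t. ahead I a = w}. arc_gain I a * f a)
        = (if w = u then 1 else 0))"

definition aug_cost :: "('v,'e) gnf \<Rightarrow> nat \<Rightarrow> ('e arc \<Rightarrow> real) \<Rightarrow> real" where
  "aug_cost I t f = (\<Sum>a\<in>all_arcs I t. arc_cost I a * f a)"

definition walk :: "('v,'e) gnf \<Rightarrow> 'v list \<Rightarrow> 'e arc list \<Rightarrow> bool" where
  "walk I vs as \<longleftrightarrow> length vs = Suc (length as) \<and>
     (\<forall>i<length as. atail I (as ! i) = vs ! i \<and> ahead I (as ! i) = vs ! Suc i)"

definition supp :: "('e arc \<Rightarrow> real) \<Rightarrow> 'e arc set" where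
  "supp f = {a. f a > 0}"

definition aug_path :: "('v,'e) gnf \<Rightarrow> nat \<Rightarrow> ('e \<Rightarrow> real) \<Rightarrow> 'v \<Rightarrow> ('e arc \<Rightarrow> real) \<Rightarrow> bool" where
  "aug_path I t x u f \<longleftrightarrow> frac_aug I t x u f \<and>
     ((\<exists>vs as. walk I vs as \<and> distinct vs \<and> hd vs = u \<and> last vs = sink I \<and> set as = supp f)
    \<or> (\<exists>vs as. vs \<noteq> [] \<and> walk I (vs @ [hd vs]) as \<and> distinct vs \<and> hd vs = u \<and>
               sink I \<notin> set vs \<and> set as = supp f)
    \<or> (\<exists>cs cas ps pas. cs \<noteq> [] \<and> walk I (cs @ [hd cs]) cas \<and> distinct cs \<and>
               u \<notin> set cs \<and> sink I \<notin> set cs \<and>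
               walk I ps pas \<and> distinct ps \<and> hd ps = u \<and> last ps \<in> set cs \<and>
               set (butlast ps) \<inter> set cs = {} \<and> supp f = set cas \<union> set pas))"

definition augment :: "('v,'e) gnf \<Rightarrow> ('e \<Rightarrow> real) \<Rightarrow> ('e arc \<Rightarrow> real) \<Rightarrow> real \<Rightarrow> ('e \<Rightarrow> real)" where
  "augment I x f \<theta> = (\<lambda>e. x e + \<theta> * f (Fw e) - \<theta> * f (Bw e) / gain I e)"

definition feasible_step :: "('v,'e) gnf \<Rightarrow> nat \<Rightarrow> ('e \<Rightarrow> real) \<Rightarrow> ('e arc \<Rightarrow> real) \<Rightarrow> real \<Rightarrow> bool" where
  "feasible_step I t x f \<theta> \<longleftrightarrow> \<theta> \<ge> 0 \<and>
     (\<forall>e\<in>edges_at I t. 0 \<le> augment I x f \<theta> e \<and> ereal (augment I x f \<theta> e) \<le> cap I e) \<and>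
     outflow I t (augment I x f \<theta>) (src I t) \<le> 1"

definition alg_step :: "('v,'e) gnf \<Rightarrow> nat \<Rightarrow> ('e \<Rightarrow> real) \<Rightarrow> ('e \<Rightarrow> real) \<Rightarrow> bool" where
  "alg_step I t x x' \<longleftrightarrow> outflow I t x (src I t) < 1 \<and>
     (\<exists>f \<theta>. aug_path I t x (src I t) f \<and>
            (\<forall>g. aug_path I t x (src I t) g \<longrightarrow> aug_cost I t f \<le> aug_cost I t g) \<and>
            feasible_step I t x f \<theta> \<and>
            (\<forall>\<theta>'. feasible_step I t x f \<theta>' \<longrightarrow> \<theta>' \<le> \<theta>) \<and>
            x' = augment I x f \<theta>)"

definition alg_phase :: "('v,'e) gnf \<Rightarrow> nat \<Rightarrow> ('e \<Rightarrow> real) \<Rightarrow> ('e \<Rightarrow> real) \<Rightarrow> bool" where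
  "alg_phase I t x x' \<longleftrightarrow> (alg_step I t)\<^sup>*\<^sup>* x x' \<and> \<not> outflow I t x' (src I t) < 1"

definition alg_run :: "('v,'e) gnf \<Rightarrow> (nat \<Rightarrow> 'e \<Rightarrow> real) \<Rightarrow> bool" where
  "alg_run I xs \<longleftrightarrow> xs 0 = (\<lambda>_. 0) \<and> (\<forall>t\<in>{1..horizon I}. alg_phase I t (xs (t - 1)) (xs t))"

definition height :: "('v,'e) gnf \<Rightarrow> nat \<Rightarrow> ('e \<Rightarrow> real) \<Rightarrow> 'v \<Rightarrow> real" where
  "height I t x v = Inf (aug_cost I t ` {f. aug_path I t x v f})"

end

theory Submission
  imports Defs
begin

lemma inst_facts:
  assumes "gnf_instance I B dummy"
  shows "finite (verts I)" "finite (edges I)" "sink I \<in> verts I"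
    "\<And>e. e\<in>edges I \<Longrightarrow> etail I e \<in> verts I \<and> ehead I e \<in> verts I"
    "\<And>e. e\<in>edges I \<Longrightarrow> etail I e \<noteq> ehead I e"
    "\<And>e. e\<in>edges I \<Longrightarrow> etail I e \<noteq> sink I"
    "inj_on (src I) {1..horizon I}"
    "\<And>t. t\<in>{1..horizon I} \<Longrightarrow> src I t \<in> verts I \<and> src I t \<noteq> sink I"
    "\<And>t e. t\<in>{1..horizon I} \<Longrightarrow> e\<in>edges I \<Longrightarrow> ehead I e \<noteq> src I t"
    "\<And>e. e\<in>edges I \<Longrightarrow> cap I e > 0 \<and> cst I e > 0 \<and> gain I e > 0"
    "\<And>v. v\<in>verts I - {sink I} \<Longrightarrow> dummy v \<in> edges I \<and> etail I (dummy v) = v \<and>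
         ehead I (dummy v) = sink I \<and> cap I (dummy v) = \<infinity>"
  using assms unfolding gnf_instance_def by (auto; metis)+


lemma edges_at_sub: "edges_at I t \<subseteq> edges I"
  unfolding edges_at_def by auto

lemma fin_edges_at: "gnf_instance I B dummy \<Longrightarrow> finite (edges_at I t)"
  using edges_at_sub inst_facts(2) finite_subset by metis

lemma fin_all_arcs: "gnf_instance I B dummy \<Longrightarrow> finite (all_arcs I t)"
  unfolding all_arcs_def using fin_edges_at by blast

lemma res_sub: "res_arcs I t x \<subseteq> all_arcs I t"
  unfolding res_arcs_def all_arcs_def by auto

lemma arc_gain_pos: "gnf_instance I B dummy \<Longrightarrow> a \<in> all_arcs I t \<Longrightarrow> arc_gain I a > 0"
  unfolding all_arcs_def using edges_at_sub inst_facts(10) by (cases a) fastforce+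

lemma arc_cost_nonneg: assumes "gnf_instance I B dummy" "a \<in> all_arcs I t" shows "arc_cost I a \<ge> 0"
proof -
  obtain e where e: "e \<in> edges I" "a = Fw e \<or> a = Bw e" using edges_at_sub[of I t] assms(2) unfolding all_arcs_def by blast
  then show ?thesis using inst_facts(10)[OF \<open>gnf_instance I B dummy\<close> e(1)] by auto
qed

lemma arc_ends: assumes "gnf_instance I B dummy" "a \<in> all_arcs I t"
  shows "atail I a \<in> verts_at I t \<and> ahead I a \<in> verts_at I t"
proof -
  obtain e where e: "e \<in> edges_at I t" "a = Fw e \<or> a = Bw e" using assms(2) unfolding all_arcs_def by auto
  have ee: "e \<in> edges I" using e edges_at_sub[of I t] by auto
  have t: "etail I e \<in> verts_at I t" using e(1) inst_facts(4)[OF assms(1) ee]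
    unfolding edges_at_def verts_at_def by auto
  have h: "ehead I e \<in> verts_at I t" using inst_facts(4)[OF assms(1) ee] inst_facts(9)[OF assms(1) _ ee]
    unfolding verts_at_def by (auto, metis Suc_leI le_less_trans not_less0 zero_less_iff_neq_zero le0 less_imp_le)
  show ?thesis using e(2) t h by auto
qed

definition aexc :: "('v,'e) gnf \<Rightarrow> nat \<Rightarrow> ('e arc \<Rightarrow> real) \<Rightarrow> 'v \<Rightarrow> real" where
  "aexc I t g w = (\<Sum>a\<in>{a\<in>all_arcs I t. atail I a = w}. g a)
        - (\<Sum>a\<in>{a\<in>all_arcs I t. ahead I a = w}. arc_gain I a * g a)"

lemma aexc_eq_excess:
  assumes inst: "gnf_instance I B dummy"
  shows "aexc I t g w = excess I t (\<lambda>e. g (Fw e) - g (Bw e) / gain I e) w"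
proof -
  let ?E = "edges_at I t"
  have fin: "finite ?E" using fin_edges_at[OF inst] .
  have s1: "{a\<in>all_arcs I t. atail I a = w} = Fw ` {e\<in>?E. etail I e = w} \<union> Bw ` {e\<in>?E. ehead I e = w}"
    unfolding all_arcs_def by auto
  have s2: "{a\<in>all_arcs I t. ahead I a = w} = Fw ` {e\<in>?E. ehead I e = w} \<union> Bw ` {e\<in>?E. etail I e = w}"
    unfolding all_arcs_def by auto
  have A: "(\<Sum>a\<in>{a\<in>all_arcs I t. atail I a = w}. g a) =
      (\<Sum>e\<in>{e\<in>?E. etail I e = w}. g (Fw e)) + (\<Sum>e\<in>{e\<in>?E. ehead I e = w}. g (Bw e))"
    unfolding s1 using fin
    by (subst sum.union_disjoint) (auto simp: sum.reindex inj_on_def)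
  have Bq: "(\<Sum>a\<in>{a\<in>all_arcs I t. ahead I a = w}. arc_gain I a * g a) =
      (\<Sum>e\<in>{e\<in>?E. ehead I e = w}. gain I e * g (Fw e)) + (\<Sum>e\<in>{e\<in>?E. etail I e = w}. g (Bw e) / gain I e)"
    unfolding s2 using fin
    by (subst sum.union_disjoint) (auto simp: sum.reindex inj_on_def)
  have gpos: "\<And>e. e \<in> ?E \<Longrightarrow> gain I e \<noteq> 0" using inst_facts(10)[OF inst] edges_at_sub by fastforce
  have C: "(\<Sum>e\<in>{e\<in>?E. ehead I e = w}. gain I e * (g (Fw e) - g (Bw e) / gain I e)) =
     (\<Sum>e\<in>{e\<in>?E. ehead I e = w}. gain I e * g (Fw e)) - (\<Sum>e\<in>{e\<in>?E. ehead I e = w}. g (Bw e))"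
    unfolding sum_subtractf[symmetric] by (rule sum.cong) (auto simp: right_diff_distrib gpos)
  show ?thesis unfolding aexc_def excess_def A Bq C by (simp add: sum_subtractf)
qed

lemma excess_lin: "excess I t (\<lambda>e. x e + c * y e) w = excess I t x w + c * excess I t y w"
  unfolding excess_def by (simp add: sum.distrib sum_distrib_left algebra_simps)

lemma excess_diff: "excess I t (\<lambda>e. c * y e - x e) w = c * excess I t y w - excess I t x w"
  unfolding excess_def by (simp add: sum_subtractf sum_distrib_left algebra_simps)

lemma augment_alt: "augment I x f \<theta> = (\<lambda>e. x e + \<theta> * (f (Fw e) - f (Bw e) / gain I e))"
  unfolding augment_def by (auto simp: algebra_simps)

lemma excess_augment:
  assumes inst: "gnf_instance I B dummy"
  shows "excess I t (augment I x f \<theta>) w = excess I t x w + \<theta> * aexc I t f w"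
  unfolding augment_alt excess_lin aexc_eq_excess[OF inst] ..


definition cf :: "(nat \<Rightarrow> 'e arc) \<Rightarrow> nat \<Rightarrow> (nat \<Rightarrow> real) \<Rightarrow> 'e arc \<Rightarrow> real" where
  "cf q n \<kappa> a = (\<Sum>i<n. if q i = a then \<kappa> i else 0)"

lemma cf_out:
  assumes "\<forall>i<n. q i \<in> A" "finite A"
  shows "(\<Sum>a\<in>{a\<in>A. P a}. cf q n \<kappa> a) = (\<Sum>i<n. if P (q i) then \<kappa> i else 0)"
proof -
  have "(\<Sum>a\<in>{a\<in>A. P a}. cf q n \<kappa> a) = (\<Sum>i<n. \<Sum>a\<in>{a\<in>A. P a}. if q i = a then \<kappa> i else 0)"
    unfolding cf_def by (rule sum.swap)
  also have "\<dots> = (\<Sum>i<n. if P (q i) then \<kappa> i else 0)"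
    using assms by (intro sum.cong refl) (simp add: sum.delta')
  finally show ?thesis .
qed

lemma cf_in:
  assumes "\<forall>i<n. q i \<in> A" "finite A"
  shows "(\<Sum>a\<in>{a\<in>A. P a}. gg a * cf q n \<kappa> a) = (\<Sum>i<n. if P (q i) then gg (q i) * \<kappa> i else 0)"
proof -
  have "(\<Sum>a\<in>{a\<in>A. P a}. gg a * cf q n \<kappa> a) = (\<Sum>a\<in>{a\<in>A. P a}. \<Sum>i<n. if q i = a then gg a * \<kappa> i else 0)"
    unfolding cf_def sum_distrib_left by (intro sum.cong refl) (auto intro: sum.cong)
  also have "\<dots> = (\<Sum>i<n. \<Sum>a\<in>{a\<in>A. P a}. if q i = a then gg a * \<kappa> i else 0)"
    by (rule sum.swap)
  also have "\<dots> = (\<Sum>i<n. if P (q i) then gg (q i) * \<kappa> i else 0)"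
    using assms by (intro sum.cong refl) (simp add: sum.delta')
  finally show ?thesis .
qed

lemma aexc_cf:
  assumes inst: "gnf_instance I B dummy" and "\<forall>i<n. q i \<in> all_arcs I t"
  shows "aexc I t (cf q n \<kappa>) w = (\<Sum>i<n. if atail I (q i) = w then \<kappa> i else 0)
           - (\<Sum>i<n. if ahead I (q i) = w then arc_gain I (q i) * \<kappa> i else 0)"
  unfolding aexc_def
  using cf_out[OF assms(2) fin_all_arcs[OF inst], where P="\<lambda>a. atail I a = w"]
     cf_in[OF assms(2) fin_all_arcs[OF inst], where P="\<lambda>a. ahead I a = w" and gg="arc_gain I"] by simp

lemma aug_cost_cf:
  assumes inst: "gnf_instance I B dummy" and "\<forall>i<n. q i \<in> all_arcs I t"
  shows "aug_cost I t (cf q n \<kappa>) = (\<Sum>i<n. arc_cost I (q i) * \<kappa> i)"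
  unfolding aug_cost_def
  using cf_in[OF assms(2) fin_all_arcs[OF inst], where P="\<lambda>a. True" and gg="arc_cost I"] by simp

lemma cf_zero: "a \<notin> q ` {..<n} \<Longrightarrow> cf q n \<kappa> a = 0"
  unfolding cf_def by (rule sum.neutral) auto

lemma cf_nonneg: "(\<forall>i<n. \<kappa> i \<ge> 0) \<Longrightarrow> cf q n \<kappa> a \<ge> 0"
  unfolding cf_def by (rule sum_nonneg) auto

lemma cf_pos: assumes "\<forall>i<n. \<kappa> i \<ge> 0" "i < n" "q i = a" "\<kappa> i > 0"
  shows "cf q n \<kappa> a > 0"
proof -
  have "cf q n \<kappa> a \<ge> (if q i = a then \<kappa> i else 0)"
    unfolding cf_def using assms(1,2) by (intro member_le_sum) auto
  then show ?thesis using assms by auto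
qed

lemma out_pm:
  fixes p :: "nat \<Rightarrow> 'v"
  assumes "inj_on p {..<n}" "m < n"
  shows "(\<Sum>i<n. if p i = p m then c i else 0) = c m"
proof -
  have "(\<Sum>i<n. if p i = p m then c i else 0) = (\<Sum>i<n. if i = m then c i else 0)"
    using assms by (intro sum.cong refl) (auto dest: inj_onD)
  also have "\<dots> = c m" using assms(2) by simp
  finally show ?thesis .
qed

lemma in_pm:
  fixes p :: "nat \<Rightarrow> 'v"
  assumes "inj_on p {..<n}" "m < n"
  shows "(\<Sum>i<n. if p (Suc i) = p m then c i else 0) =
     (if 0 < m then c (m - 1) else 0) + (if p n = p m then c (n - 1) else 0)"
proof -
  obtain n' where n: "n = Suc n'" using assms(2) by (cases n) auto
  have "(\<Sum>i<n'. if p (Suc i) = p m then c i else 0) = (\<Sum>i<n'. if i = m - 1 \<and> 0 < m then c i else 0)"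
  proof (intro sum.cong refl)
    fix i assume i: "i \<in> {..<n'}"
    have "p (Suc i) = p m \<longleftrightarrow> Suc i = m" using assms(1) i n assms(2) by (intro inj_on_eq_iff) auto
    then show "(if p (Suc i) = p m then c i else 0) = (if i = m - 1 \<and> 0 < m then c i else 0)" by auto
  qed
  also have "\<dots> = (if 0 < m then c (m - 1) else 0)"
    using assms n by (cases "0 < m") auto
  finally show ?thesis unfolding n by simp
qed

lemma out_notin:
  fixes p :: "nat \<Rightarrow> 'v"
  assumes "w \<notin> p ` {..<n}"
  shows "(\<Sum>i<n. if p i = w then c i else 0) = 0"
  using assms by (intro sum.neutral) auto

lemma in_notin:
  assumes "w \<notin> p ` {..<n}" "w \<noteq> p n"
  shows "(\<Sum>i<n. if p (Suc i) = w then c i else 0) = 0"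
proof (intro sum.neutral ballI)
  fix i assume "i \<in> {..<n}"
  then have "Suc i < n \<or> Suc i = n" by auto
  then show "(if p (Suc i) = w then c i else 0) = 0" using assms by auto
qed

definition gp :: "('v,'e) gnf \<Rightarrow> (nat \<Rightarrow> 'e arc) \<Rightarrow> nat \<Rightarrow> real" where
  "gp I q i = (\<Prod>l<i. arc_gain I (q l))"

lemma gp_0[simp]: "gp I q 0 = 1" unfolding gp_def by simp
lemma gp_Suc: "gp I q (Suc i) = arc_gain I (q i) * gp I q i" unfolding gp_def by (simp add: mult.commute)
lemma gp_pos: "(\<forall>l<i. arc_gain I (q l) > 0) \<Longrightarrow> gp I q i > 0"
  unfolding gp_def by (rule prod_pos) auto

lemma walk_range:
  assumes "\<forall>i. j \<le> i \<longrightarrow> i < k \<longrightarrow> atail I (q i) = p i \<and> ahead I (q i) = p (Suc i)" "j \<le> k"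
  shows "walk I (map p [j..<Suc k]) (map q [j..<k])"
proof -
  have "\<forall>i < k - j. atail I (map q [j..<k] ! i) = map p [j..<Suc k] ! i \<and>
         ahead I (map q [j..<k] ! i) = map p [j..<Suc k] ! Suc i"
  proof (intro allI impI)
    fix i assume i: "i < k - j"
    then have "atail I (q (j + i)) = p (j + i) \<and> ahead I (q (j + i)) = p (Suc (j + i))" using assms by auto
    moreover have "map q [j..<k] ! i = q (j + i)" using i by (simp add: nth_map_upt)
    moreover have "map p [j..<Suc k] ! i = p (j + i)" using i by (simp del: upt_Suc add: nth_map_upt)
    moreover have "map p [j..<Suc k] ! Suc i = p (j + Suc i)" using i by (simp del: upt_Suc add: nth_map_upt)
    ultimately show "atail I (map q [j..<k] ! i) = map p [j..<Suc k] ! i \<and>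
         ahead I (map q [j..<k] ! i) = map p [j..<Suc k] ! Suc i" by simp
  qed
  then show ?thesis unfolding walk_def using assms(2) by simp
qed


lemma supp_cf:
  assumes "\<forall>i<n. \<kappa> i > 0"
  shows "supp (cf q n \<kappa>) = q ` {..<n}"
proof
  show "supp (cf q n \<kappa>) \<subseteq> q ` {..<n}"
  proof
    fix a assume "a \<in> supp (cf q n \<kappa>)"
    then have p: "cf q n \<kappa> a > 0" by (simp add: supp_def)
    show "a \<in> q ` {..<n}"
    proof (rule ccontr)
      assume "a \<notin> q ` {..<n}"
      then have "cf q n \<kappa> a = 0" by (rule cf_zero)
      then show False using p by simp
    qed
  qed
  show "q ` {..<n} \<subseteq> supp (cf q n \<kappa>)" 
  proof
    fix a assume "a \<in> q ` {..<n}"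
    then obtain i where i: "i < n" "q i = a" by blast
    have nn: "\<forall>i<n. 0 \<le> \<kappa> i" using assms by (simp add: order_less_imp_le)
    have "cf q n \<kappa> a > 0" using cf_pos[of n \<kappa> i q a] nn i assms by blast
    then show "a \<in> supp (cf q n \<kappa>)" by (simp add: supp_def)
  qed
qed

lemma alg_r: "(gj::real) > 0 \<Longrightarrow> gn < gj \<Longrightarrow> gj * (1 / (1 - gn / gj)) - gn * (1 / (1 - gn / gj)) = gj"
proof -
  assume a: "gj > 0" "gn < gj"
  have "1 - gn / gj = (gj - gn) / gj" using a by (simp add: field_simps)
  then have e: "1 / (1 - gn / gj) = gj / (gj - gn)" by simp
  have "gj * (1 / (1 - gn / gj)) - gn * (1 / (1 - gn / gj)) = (gj - gn) * (1 / (1 - gn / gj))"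
    by (simp only: left_diff_distrib)
  also have "\<dots> = (gj - gn) * (gj / (gj - gn))" unfolding e ..
  also have "\<dots> = gj" using a by simp
  finally show ?thesis .
qed

lemma inj_Suc_ext: "inj_on p {..<n} \<Longrightarrow> p n \<notin> p ` {..<n} \<Longrightarrow> inj_on p {..<Suc n}"
  by (simp add: lessThan_Suc)

lemma lasso_aug:
  assumes inst: "gnf_instance I B dummy"
  and n: "0 < n"
  and pV: "\<forall>i<n. p i \<in> verts_at I t - {sink I}"
  and inj: "inj_on p {..<n}"
  and qr: "\<forall>i<n. q i \<in> res_arcs I t x"
  and wk: "\<forall>i<n. atail I (q i) = p i \<and> ahead I (q i) = p (Suc i)"
  and cs: "(p n = sink I \<and> j = n \<and> r = 1) \<or>
           (j < n \<and> p n = p j \<and> gp I q n < gp I q j \<and> r = 1 / (1 - gp I q n / gp I q j))"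
  defines "\<kappa> \<equiv> (\<lambda>i. gp I q i * (if j \<le> i then r else 1))"
  shows "aug_path I t x (p 0) (cf q n \<kappa>) \<and> supp (cf q n \<kappa>) = q ` {..<n}"
proof -
  have qA: "\<forall>i<n. q i \<in> all_arcs I t" using qr res_sub by blast
  have gpos: "\<forall>i<n. arc_gain I (q i) > 0" using qA arc_gain_pos[OF inst] by blast
  have gpp: "\<And>i. i \<le> n \<Longrightarrow> gp I q i > 0" using gpos by (intro gp_pos) auto
  have rpos: "r > 0" using cs gpp[of j] gpp[of n] by (auto simp: field_simps)
  have kpos: "\<forall>i<n. \<kappa> i > 0" unfolding \<kappa>_def using gpp rpos by auto
  have supp: "supp (cf q n \<kappa>) = q ` {..<n}" by (rule supp_cf[OF kpos])
  have pnot: "p n \<noteq> sink I \<Longrightarrow> p n \<in> p ` {..<n}" using cs by auto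
  have cons: "aexc I t (cf q n \<kappa>) w = (if w = p 0 then 1 else 0)" if w: "w \<in> verts_at I t - {sink I}" for w
  proof -
    have "aexc I t (cf q n \<kappa>) w = (\<Sum>i<n. if p i = w then \<kappa> i else 0)
           - (\<Sum>i<n. if p (Suc i) = w then arc_gain I (q i) * \<kappa> i else 0)"
    proof -
      have e1: "(\<Sum>i<n. if atail I (q i) = w then \<kappa> i else 0) = (\<Sum>i<n. if p i = w then \<kappa> i else 0)"
        using wk by (intro sum.cong) auto
      have e2: "(\<Sum>i<n. if ahead I (q i) = w then arc_gain I (q i) * \<kappa> i else 0)
          = (\<Sum>i<n. if p (Suc i) = w then arc_gain I (q i) * \<kappa> i else 0)"
        using wk by (intro sum.cong) auto
      show ?thesis unfolding aexc_cf[OF inst qA] e1 e2 ..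
    qed
    also have "\<dots> = (if w = p 0 then 1 else 0)"
    proof (cases "w \<in> p ` {..<n}")
      case False
      have "w \<noteq> p n" using pnot False w by auto
      have z1: "(\<Sum>i<n. if p i = w then \<kappa> i else 0) = 0" by (rule out_notin[OF False])
      have z2: "(\<Sum>i<n. if p (Suc i) = w then arc_gain I (q i) * \<kappa> i else 0) = 0"
        by (rule in_notin[OF False \<open>w \<noteq> p n\<close>])
      have "w \<noteq> p 0" using False n by auto
      then show ?thesis using z1 z2 by simp
    next
      case True
      then obtain m where m: "m < n" "w = p m" by auto
      have e0: "p m = p 0 \<longleftrightarrow> m = 0" using inj m n by (intro inj_on_eq_iff) auto
      have gm: "0 < m \<Longrightarrow> arc_gain I (q (m - 1)) * gp I q (m - 1) = gp I q m"
        using gp_Suc[of I q "m - 1"] by simp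
      have gn: "arc_gain I (q (n - 1)) * gp I q (n - 1) = gp I q n"
        using gp_Suc[of I q "n - 1"] n by simp
      have "(\<Sum>i<n. if p i = w then \<kappa> i else 0)
           - (\<Sum>i<n. if p (Suc i) = w then arc_gain I (q i) * \<kappa> i else 0)
           = \<kappa> m - ((if 0 < m then arc_gain I (q (m - 1)) * \<kappa> (m - 1) else 0)
                 + (if p n = p m then arc_gain I (q (n - 1)) * \<kappa> (n - 1) else 0))"
        unfolding m(2) out_pm[OF inj m(1)] in_pm[OF inj m(1)] ..
      also have "\<dots> = (if m = 0 then 1 else 0)"
      proof -
        have step: "arc_gain I (q (m - 1)) * \<kappa> (m - 1) = \<kappa> m" if "0 < m" "m \<noteq> j"
        proof -
          have cc: "(j \<le> m - 1) = (j \<le> m)" using that by auto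
          show ?thesis unfolding \<kappa>_def cc using gm[OF that(1)] by (simp add: mult.assoc[symmetric])
        qed
        have k0: "\<kappa> 0 = 1" if "j \<noteq> 0" unfolding \<kappa>_def using that by simp
        show ?thesis
        proof (cases "p n = sink I")
          case True
          then have jn: "j = n" "p n \<noteq> p m" using cs pV m by auto
          have "m \<noteq> j" using jn m by simp
          then show ?thesis using jn step k0 by (cases "m = 0") simp_all
        next
          case False
          then have c2: "j < n" "p n = p j" "gp I q n < gp I q j" "r = 1 / (1 - gp I q n / gp I q j)" using cs by auto
          have pe: "p n = p m \<longleftrightarrow> m = j" using c2 inj_on_eq_iff[OF inj, of j m] m by auto
          have gj: "gp I q j > 0" using gpp c2 by auto
          have ar: "gp I q j * r - gp I q n * r = gp I q j" using alg_r[OF gj c2(3)] unfolding c2(4)[symmetric] .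
          show ?thesis
          proof (cases "m = j")
            case True
            have k1: "\<kappa> m = gp I q j * r" using True by (simp add: \<kappa>_def)
            have k2: "arc_gain I (q (m - 1)) * \<kappa> (m - 1) = gp I q j" if "0 < m"
            proof -
              have "\<not> j \<le> m - 1" using True that by auto
              then have "\<kappa> (m - 1) = gp I q (m - 1)" by (simp add: \<kappa>_def)
              then show ?thesis using gm[OF that] True by simp
            qed
            have k3: "arc_gain I (q (n - 1)) * \<kappa> (n - 1) = gp I q n * r"
            proof -
              have "j \<le> n - 1" using c2 by auto
              then have "\<kappa> (n - 1) = gp I q (n - 1) * r" by (simp add: \<kappa>_def)
              then show ?thesis using gn by (simp add: mult.assoc[symmetric])
            qed
            have pm: "p n = p m" using pe True by simp
            show ?thesis
            proof (cases "m = 0")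
              case True
              then have "j = 0" using \<open>m = j\<close> by simp
              then show ?thesis using k1 k3 pm ar True by simp
            next
              case False
              then show ?thesis using k1 k2 k3 pm ar \<open>m = j\<close> by simp
            qed
          next
            case False
            have "p n \<noteq> p m" using pe False by simp
            then show ?thesis using step[OF _ False] k0 False by (cases "m = 0") auto
          qed
        qed
      qed
      finally show ?thesis using e0 m by auto
    qed
    finally show ?thesis .
  qed
  have fa: "frac_aug I t x (p 0) (cf q n \<kappa>)"
    unfolding frac_aug_def
  proof (intro conjI allI impI ballI)
    fix a show "0 \<le> cf q n \<kappa> a" using kpos by (intro cf_nonneg) (simp add: order_less_imp_le)
  next
    fix a assume "cf q n \<kappa> a \<noteq> 0"
    then have "a \<in> q ` {..<n}" using cf_zero by blast
    then show "a \<in> res_arcs I t x" using qr by auto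
  next
    fix w assume "w \<in> verts_at I t - {sink I}"
    then show "(\<Sum>a\<in>{a \<in> all_arcs I t. atail I a = w}. cf q n \<kappa> a) -
          (\<Sum>a\<in>{a \<in> all_arcs I t. ahead I a = w}. arc_gain I a * cf q n \<kappa> a) =
          (if w = p 0 then 1 else 0)" using cons unfolding aexc_def by blast
  qed
  have wkr: "\<And>j k. j \<le> k \<Longrightarrow> k \<le> n \<Longrightarrow> walk I (map p [j..<Suc k]) (map q [j..<k])"
    using wk by (intro walk_range) auto
  have shape: "(\<exists>vs as. walk I vs as \<and> distinct vs \<and> hd vs = p 0 \<and> last vs = sink I \<and> set as = supp (cf q n \<kappa>))
    \<or> (\<exists>vs as. vs \<noteq> [] \<and> walk I (vs @ [hd vs]) as \<and> distinct vs \<and> hd vs = p 0 \<and>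
               sink I \<notin> set vs \<and> set as = supp (cf q n \<kappa>))
    \<or> (\<exists>cs cas ps pas. cs \<noteq> [] \<and> walk I (cs @ [hd cs]) cas \<and> distinct cs \<and>
               p 0 \<notin> set cs \<and> sink I \<notin> set cs \<and>
               walk I ps pas \<and> distinct ps \<and> hd ps = p 0 \<and> last ps \<in> set cs \<and>
               set (butlast ps) \<inter> set cs = {} \<and> supp (cf q n \<kappa>) = set cas \<union> set pas)"
  proof (cases "p n = sink I")
    case True
    have "p n \<notin> p ` {..<n}" using True pV by auto
    then have inj2: "inj_on p {..<Suc n}" using inj_Suc_ext[OF inj] by blast
    have "walk I (map p [0..<Suc n]) (map q [0..<n])" using wkr[of 0 n] by simp
    moreover have "distinct (map p [0..<Suc n])" using inj2 by (simp add: distinct_map atLeast0LessThan del: upt_Suc)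
    moreover have "hd (map p [0..<Suc n]) = p 0" by (simp del: upt_Suc add: hd_map)
    moreover have "last (map p [0..<Suc n]) = sink I" using True by (simp del: upt_Suc add: last_map)
    moreover have "set (map q [0..<n]) = supp (cf q n \<kappa>)" using supp by (simp add: atLeast0LessThan)
    ultimately have "walk I (map p [0..<Suc n]) (map q [0..<n]) \<and> distinct (map p [0..<Suc n]) \<and> hd (map p [0..<Suc n]) = p 0 \<and>
       last (map p [0..<Suc n]) = sink I \<and> set (map q [0..<n]) = supp (cf q n \<kappa>)" by (intro conjI)
    then show ?thesis by (intro disjI1 exI)
  next
    case False
    then have c2: "j < n" "p n = p j" using cs by auto
    show ?thesis
    proof (cases "j = 0")
      case True
      let ?vs = "map p [0..<n]"
      have hv: "hd ?vs = p 0" using n by (simp add: hd_map)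
      have "?vs @ [hd ?vs] = map p [0..<Suc n]" using hv c2 True by simp
      then have "walk I (?vs @ [hd ?vs]) (map q [0..<n])" using wkr[of 0 n] by simp
      moreover have "?vs \<noteq> []" using n by simp
      moreover have "distinct ?vs" using inj by (simp add: distinct_map atLeast0LessThan)
      moreover have "sink I \<notin> set ?vs" using pV by auto
      moreover have "set (map q [0..<n]) = supp (cf q n \<kappa>)" using supp by (simp add: atLeast0LessThan)
      ultimately have "?vs \<noteq> [] \<and> walk I (?vs @ [hd ?vs]) (map q [0..<n]) \<and> distinct ?vs \<and> hd ?vs = p 0 \<and>
               sink I \<notin> set ?vs \<and> set (map q [0..<n]) = supp (cf q n \<kappa>)" using hv by (intro conjI)
      then show ?thesis by (intro disjI2 disjI1 exI)
    next
      case False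
      let ?cs = "map p [j..<n]" and ?cas = "map q [j..<n]" and ?ps = "map p [0..<Suc j]" and ?pas = "map q [0..<j]"
      have hc: "hd ?cs = p j" using c2 by (simp add: hd_map)
      have "?cs @ [hd ?cs] = map p [j..<Suc n]" using hc c2 by simp
      then have w1: "walk I (?cs @ [hd ?cs]) ?cas" using wkr[of j n] c2 by simp
      have w2: "walk I ?ps ?pas" using wkr[of 0 j] c2 by simp
      have ne: "?cs \<noteq> []" using c2 by simp
      have i1: "inj_on p {j..<n}" by (rule inj_on_subset[OF inj]) auto
      have d1: "distinct ?cs" using i1 by (simp add: distinct_map)
      have i2: "inj_on p {0..<Suc j}" by (rule inj_on_subset[OF inj]) (use c2 in auto)
      have d2: "distinct ?ps" using i2 by (simp add: distinct_map del: upt_Suc)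
      have u1: "p 0 \<notin> set ?cs"
      proof
        assume "p 0 \<in> set ?cs"
        then obtain i where "j \<le> i" "i < n" "p 0 = p i" by auto
        then have "0 = i" using inj_onD[OF inj, of 0 i] n by auto
        then show False using False \<open>j \<le> i\<close> by simp
      qed
      have s1: "sink I \<notin> set ?cs" using pV by auto
      have hp: "hd ?ps = p 0" by (simp del: upt_Suc add: hd_map)
      have lp: "last ?ps \<in> set ?cs" using c2 by (simp del: upt_Suc add: last_map)
      have bl: "butlast ?ps = map p [0..<j]" by (simp add: map_butlast[symmetric])
      have dj: "set (butlast ?ps) \<inter> set ?cs = {}"
      proof -
        { fix a b assume "a < j" "j \<le> b" "b < n" "p a = p b"
          then have "a = b" using inj_onD[OF inj, of a b] by auto
          then have False using \<open>a < j\<close> \<open>j \<le> b\<close> by simp }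
        then show ?thesis unfolding bl by auto
      qed
      have "{..<n} = {j..<n} \<union> {0..<j}" using c2 by auto
      then have "q ` {..<n} = q ` {j..<n} \<union> q ` {0..<j}" by (simp only: image_Un)
      moreover have "set ?cas = q ` {j..<n}" "set ?pas = q ` {0..<j}" by simp_all
      ultimately have "supp (cf q n \<kappa>) = set ?cas \<union> set ?pas" unfolding supp by simp
      then have "?cs \<noteq> [] \<and> walk I (?cs @ [hd ?cs]) ?cas \<and> distinct ?cs \<and>
               p 0 \<notin> set ?cs \<and> sink I \<notin> set ?cs \<and>
               walk I ?ps ?pas \<and> distinct ?ps \<and> hd ?ps = p 0 \<and> last ?ps \<in> set ?cs \<and>
               set (butlast ?ps) \<inter> set ?cs = {} \<and> supp (cf q n \<kappa>) = set ?cas \<union> set ?pas"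
        using w1 w2 ne d1 d2 u1 s1 hp lp dj by (intro conjI)
      then show ?thesis by (intro disjI2 exI)
    qed
  qed
  have "aug_path I t x (p 0) (cf q n \<kappa>)" unfolding aug_path_def using fa shape by (rule conjI)
  then show ?thesis using supp by simp
qed


lemma greedy_walk:
  fixes V :: "'v set" and S :: "'e arc set" and I :: "('v,'e) gnf"
  assumes finV: "finite V" and uV: "u \<in> V" and tauV: "tau \<notin> V"
   and succ: "\<forall>v\<in>V. (v = u \<or> (\<exists>a\<in>S. ahead I a = v)) \<longrightarrow> (\<exists>a\<in>S. atail I a = v)"
   and heads: "\<forall>a\<in>S. atail I a \<in> V \<longrightarrow> ahead I a \<in> V \<or> ahead I a = tau"
  shows "\<exists>n p q. 0 < n \<and> p 0 = u \<and> (\<forall>i<n. p i \<in> V) \<and> inj_on p {..<n} \<and> (\<forall>i<n. q i \<in> S) \<and>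
           (\<forall>i<n. atail I (q i) = p i \<and> ahead I (q i) = p (Suc i)) \<and> (p n = tau \<or> (\<exists>j<n. p n = p j))"
proof -
  define nx where "nx v = (SOME a. a \<in> S \<and> atail I a = v)" for v
  define p where "p = rec_nat u (\<lambda>_ v. if v \<in> V then ahead I (nx v) else v)"
  have p0: "p 0 = u" unfolding p_def by simp
  have pS: "p (Suc i) = (if p i \<in> V then ahead I (nx (p i)) else p i)" for i unfolding p_def by simp
  have nxI: "nx v \<in> S \<and> atail I (nx v) = v" if "\<exists>a\<in>S. atail I a = v" for v
  proof -
    from that obtain a where "a \<in> S \<and> atail I a = v" by blast
    then show ?thesis unfolding nx_def by (rule someI)
  qed
  have A: "p i \<in> V \<longrightarrow> nx (p i) \<in> S \<and> atail I (nx (p i)) = p i" for i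
  proof (induction i)
    case 0
    show ?case using succ uV p0 nxI by simp
  next
    case (Suc k)
    show ?case
    proof
      assume V: "p (Suc k) \<in> V"
      have "p k \<in> V"
      proof (rule ccontr)
        assume "p k \<notin> V" then have "p (Suc k) = p k" using pS by simp
        then show False using V \<open>p k \<notin> V\<close> by simp
      qed
      then have "p (Suc k) = ahead I (nx (p k))" "nx (p k) \<in> S" using pS Suc.IH by auto
      then have "\<exists>a\<in>S. ahead I a = p (Suc k)" by metis
      then have "\<exists>a\<in>S. atail I a = p (Suc k)" using succ V by blast
      then show "nx (p (Suc k)) \<in> S \<and> atail I (nx (p (Suc k))) = p (Suc k)" by (rule nxI)
    qed
  qed
  have Bh: "p (Suc i) \<in> V \<or> p (Suc i) = tau" if "p i \<in> V" for i
  proof -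
    have "p (Suc i) = ahead I (nx (p i))" using pS that by simp
    moreover have "nx (p i) \<in> S" "atail I (nx (p i)) = p i" using A that by auto
    ultimately show ?thesis using heads that by metis
  qed
  define stop where "stop i \<longleftrightarrow> p i \<notin> V \<or> p i \<in> p ` {..<i}" for i
  have injgen: "inj_on p {..<k}" if "\<forall>i<k. \<not> stop i" for k
  proof (rule inj_onI)
    fix a b assume ab: "a \<in> {..<k}" "b \<in> {..<k}" "p a = p b"
    show "a = b"
    proof (rule ccontr)
      assume "a \<noteq> b"
      then have "a < b \<or> b < a" by arith
      then show False
      proof
        assume "a < b" then have "p b \<in> p ` {..<b}" using ab(3) by (intro image_eqI[of _ p a]) auto
        then show False using that ab unfolding stop_def by auto
      next
        assume "b < a" then have "p a \<in> p ` {..<a}" using ab(3) by (intro image_eqI[of _ p b]) auto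
        then show False using that ab unfolding stop_def by auto
      qed
    qed
  qed
  have ex: "\<exists>i. stop i"
  proof (rule ccontr)
    assume "\<not> (\<exists>i. stop i)"
    then have ns: "\<forall>i. \<not> stop i" by blast
    let ?K = "Suc (card V)"
    have "inj_on p {..<?K}" using injgen ns by blast
    moreover have "p ` {..<?K} \<subseteq> V" using ns unfolding stop_def by auto
    ultimately have "card {..<?K} \<le> card V" using finV by (rule card_inj_on_le)
    then show False by simp
  qed
  define n where "n = (LEAST i. stop i)"
  have sn: "stop n" unfolding n_def using ex by (rule LeastI_ex)
  have nb: "\<not> stop i" if "i < n" for i using that unfolding n_def by (rule not_less_Least)
  have n0: "0 < n"
  proof (rule ccontr)
    assume "\<not> 0 < n" then have "n = 0" by simp
    then have "stop 0" using sn by simp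
    then show False unfolding stop_def using uV p0 by simp
  qed
  define q where "q i = nx (p i)" for i
  have pV: "\<forall>i<n. p i \<in> V" using nb unfolding stop_def by blast
  have inj: "inj_on p {..<n}" using injgen nb by blast
  have qS: "\<forall>i<n. q i \<in> S" using A pV unfolding q_def by blast
  have wk: "\<forall>i<n. atail I (q i) = p i \<and> ahead I (q i) = p (Suc i)"
    using A pV pS unfolding q_def by simp
  have last: "p n = tau \<or> (\<exists>j<n. p n = p j)"
  proof (cases "p n \<in> V")
    case True
    then have "p n \<in> p ` {..<n}" using sn unfolding stop_def by simp
    then show ?thesis by auto
  next
    case False
    obtain m where m: "n = Suc m" using n0 by (cases n) auto
    have "p m \<in> V" using pV m by simp
    then have "p n \<in> V \<or> p n = tau" using Bh m by simp
    then show ?thesis using False by simp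
  qed
  show ?thesis using n0 p0 pV inj qS wk last by blast
qed


lemma aexc_lin: "aexc I t (\<lambda>a. f a - c * g a) w = aexc I t f w - c * aexc I t g w"
  unfolding aexc_def by (simp add: sum_subtractf sum_distrib_left algebra_simps)

lemma aug_cost_lin: "aug_cost I t (\<lambda>a. f a - c * g a) = aug_cost I t f - c * aug_cost I t g"
  unfolding aug_cost_def by (simp add: sum_subtractf sum_distrib_left algebra_simps)

lemma aug_cost_nonneg:
  assumes inst: "gnf_instance I B dummy" and "\<forall>a. f a \<ge> 0"
  shows "aug_cost I t f \<ge> 0"
  unfolding aug_cost_def
proof (rule sum_nonneg)
  fix a assume "a \<in> all_arcs I t"
  then have "arc_cost I a \<ge> 0" by (rule arc_cost_nonneg[OF inst])
  then show "arc_cost I a * f a \<ge> 0" using assms(2) by simp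
qed

lemma frac_aug_aexc:
  assumes "frac_aug I t x u f" "w \<in> verts_at I t - {sink I}"
  shows "aexc I t f w = (if w = u then 1 else 0)"
  using assms unfolding frac_aug_def aexc_def by blast

lemma height_le:
  assumes inst: "gnf_instance I B dummy" and g: "aug_path I t x u g"
  shows "height I t x u \<le> aug_cost I t g"
proof -
  have "bdd_below (aug_cost I t ` {f. aug_path I t x u f})"
  proof (rule bdd_belowI)
    fix y assume "y \<in> aug_cost I t ` {f. aug_path I t x u f}"
    then obtain f where f: "aug_path I t x u f" "y = aug_cost I t f" by blast
    then have "\<forall>a. f a \<ge> 0" unfolding aug_path_def frac_aug_def by blast
    then show "0 \<le> y" using f(2) aug_cost_nonneg[OF inst] by simp
  qed
  moreover have "aug_cost I t g \<in> aug_cost I t ` {f. aug_path I t x u f}" using g by blast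
  ultimately show ?thesis unfolding height_def by (rule cInf_lower[rotated])
qed

lemma height_nonneg:
  assumes inst: "gnf_instance I B dummy" and u: "u \<in> verts_at I t - {sink I}"
  shows "height I t x u \<ge> 0"
proof -
  have uv: "u \<in> verts I - {sink I}" using u unfolding verts_at_def by auto
  have d: "dummy u \<in> edges I" "etail I (dummy u) = u" "ehead I (dummy u) = sink I" "cap I (dummy u) = \<infinity>"
    using inst_facts(11)[OF inst uv] by auto
  have de: "dummy u \<in> edges_at I t" using d u unfolding edges_at_def verts_at_def by auto
  have res: "Fw (dummy u) \<in> res_arcs I t x" using de d(4) unfolding res_arcs_def by auto
  define p :: "nat \<Rightarrow> 'a" where "p i = (if i = 0 then u else sink I)" for i
  define q :: "nat \<Rightarrow> 'b arc" where "q i = Fw (dummy u)" for i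
  have "aug_path I t x (p 0) (cf q 1 (\<lambda>i. gp I q i * (if 1 \<le> i then 1 else 1)))
        \<and> supp (cf q 1 (\<lambda>i. gp I q i * (if 1 \<le> i then 1 else 1))) = q ` {..<1}"
  proof (rule lasso_aug[OF inst])
    show "0 < (1::nat)" by simp
    show "\<forall>i<1. p i \<in> verts_at I t - {sink I}" using u p_def by simp
    show "inj_on p {..<1}" unfolding inj_on_def by simp
    show "\<forall>i<1. q i \<in> res_arcs I t x" using res q_def by simp
    show "\<forall>i<1. atail I (q i) = p i \<and> ahead I (q i) = p (Suc i)" using d q_def p_def by simp
    show "p 1 = sink I \<and> 1 = 1 \<and> (1::real) = 1 \<or>
          1 < 1 \<and> p 1 = p 1 \<and> gp I q 1 < gp I q 1 \<and> (1::real) = 1 / (1 - gp I q 1 / gp I q 1)"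
      using p_def by simp
  qed
  then have ne: "{f. aug_path I t x u f} \<noteq> {}" using p_def by auto
  show ?thesis unfolding height_def
  proof (rule cInf_greatest)
    show "aug_cost I t ` {f. aug_path I t x u f} \<noteq> {}" using ne by blast
  next
    fix y assume "y \<in> aug_cost I t ` {f. aug_path I t x u f}"
    then obtain f where f: "aug_path I t x u f" "y = aug_cost I t f" by blast
    then have "\<forall>a. f a \<ge> 0" unfolding aug_path_def frac_aug_def by blast
    then show "0 \<le> y" using f(2) aug_cost_nonneg[OF inst] by simp
  qed
qed

lemma meas_lt:
  fixes s s' cp cp' cv :: nat
  assumes "s' < s" "cp' \<le> cv"
  shows "s' * (cv + 1) + cp' < s * (cv + 1) + cp"
proof -
  have "s' * (cv + 1) + cp' < s' * (cv + 1) + (cv + 1)" using assms(2) by simp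
  also have "\<dots> = Suc s' * (cv + 1)" by simp
  also have "\<dots> \<le> s * (cv + 1)" using assms(1) by (intro mult_le_mono1) simp
  finally show ?thesis by simp
qed


lemma lasso_exc_gen:
  assumes inst: "gnf_instance I B dummy"
  and qA: "\<forall>i<n. q i \<in> all_arcs I t"
  and inj: "inj_on p {..<n}"
  and wk: "\<forall>i<n. atail I (q i) = p i \<and> ahead I (q i) = p (Suc i)"
  shows "m < n \<Longrightarrow> aexc I t (cf q n \<kappa>) (p m) = \<kappa> m - ((if 0 < m then arc_gain I (q (m - 1)) * \<kappa> (m - 1) else 0)
                 + (if p n = p m then arc_gain I (q (n - 1)) * \<kappa> (n - 1) else 0))"
    and "w \<notin> p ` {..<n} \<Longrightarrow> w \<noteq> p n \<Longrightarrow> aexc I t (cf q n \<kappa>) w = 0"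
proof -
  have E: "aexc I t (cf q n \<kappa>) w = (\<Sum>i<n. if p i = w then \<kappa> i else 0)
           - (\<Sum>i<n. if p (Suc i) = w then arc_gain I (q i) * \<kappa> i else 0)" for w
  proof -
    have e1: "(\<Sum>i<n. if atail I (q i) = w then \<kappa> i else 0) = (\<Sum>i<n. if p i = w then \<kappa> i else 0)"
      using wk by (intro sum.cong) auto
    have e2: "(\<Sum>i<n. if ahead I (q i) = w then arc_gain I (q i) * \<kappa> i else 0)
        = (\<Sum>i<n. if p (Suc i) = w then arc_gain I (q i) * \<kappa> i else 0)"
      using wk by (intro sum.cong) auto
    show ?thesis unfolding aexc_cf[OF inst qA] e1 e2 ..
  qed
  show "m < n \<Longrightarrow> aexc I t (cf q n \<kappa>) (p m) = \<kappa> m - ((if 0 < m then arc_gain I (q (m - 1)) * \<kappa> (m - 1) else 0)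
                 + (if p n = p m then arc_gain I (q (n - 1)) * \<kappa> (n - 1) else 0))"
  proof -
    assume mn: "m < n"
    show "aexc I t (cf q n \<kappa>) (p m) = \<kappa> m - ((if 0 < m then arc_gain I (q (m - 1)) * \<kappa> (m - 1) else 0)
                 + (if p n = p m then arc_gain I (q (n - 1)) * \<kappa> (n - 1) else 0))"
      unfolding E out_pm[OF inj mn] in_pm[OF inj mn] ..
  qed
  show "w \<notin> p ` {..<n} \<Longrightarrow> w \<noteq> p n \<Longrightarrow> aexc I t (cf q n \<kappa>) w = 0"
  proof -
    assume a: "w \<notin> p ` {..<n}" "w \<noteq> p n"
    have z1: "(\<Sum>i<n. if p i = w then \<kappa> i else 0) = 0" by (rule out_notin[OF a(1)])
    have z2: "(\<Sum>i<n. if p (Suc i) = w then arc_gain I (q i) * \<kappa> i else 0) = 0"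
      by (rule in_notin[OF a])
    show ?thesis unfolding E z1 z2 by simp
  qed
qed

lemma cycle_flow:
  assumes inst: "gnf_instance I B dummy"
  and qA: "\<forall>i<n. q i \<in> all_arcs I t"
  and inj: "inj_on p {..<n}"
  and wk: "\<forall>i<n. atail I (q i) = p i \<and> ahead I (q i) = p (Suc i)"
  and j: "j < n" "p n = p j" "gp I q j \<le> gp I q n"
  defines "\<kappa> \<equiv> (\<lambda>i. if j \<le> i then gp I q i else 0)"
  shows "\<forall>w. aexc I t (cf q n \<kappa>) w \<le> 0"
    and "supp (cf q n \<kappa>) = q ` {j..<n}"
    and "\<forall>a. cf q n \<kappa> a \<ge> 0"
proof -
  have gpos: "\<forall>i<n. arc_gain I (q i) > 0" using qA arc_gain_pos[OF inst] by blast
  have gpp: "\<And>i. i \<le> n \<Longrightarrow> gp I q i > 0" using gpos by (intro gp_pos) auto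
  have knn: "\<forall>i<n. \<kappa> i \<ge> 0" unfolding \<kappa>_def using gpp by (simp add: order_less_imp_le)
  show "\<forall>a. cf q n \<kappa> a \<ge> 0" using cf_nonneg[OF knn] by blast
  show "\<forall>w. aexc I t (cf q n \<kappa>) w \<le> 0"
  proof
    fix w
    show "aexc I t (cf q n \<kappa>) w \<le> 0"
    proof (cases "w \<in> p ` {..<n}")
      case False
      have "w \<noteq> p n" using False j by auto
      then show ?thesis using lasso_exc_gen(2)[OF inst qA inj wk False] by simp
    next
      case True
      then obtain m where m: "m < n" "w = p m" by auto
      have gm: "0 < m \<Longrightarrow> arc_gain I (q (m - 1)) * gp I q (m - 1) = gp I q m"
        using gp_Suc[of I q "m - 1"] by simp
      have gn: "arc_gain I (q (n - 1)) * gp I q (n - 1) = gp I q n"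
        using gp_Suc[of I q "n - 1"] j by simp
      have pe: "p n = p m \<longleftrightarrow> m = j" using j inj_on_eq_iff[OF inj, of j m] m by auto
      have X: "aexc I t (cf q n \<kappa>) w = \<kappa> m - ((if 0 < m then arc_gain I (q (m - 1)) * \<kappa> (m - 1) else 0)
                 + (if p n = p m then arc_gain I (q (n - 1)) * \<kappa> (n - 1) else 0))"
        unfolding m(2) by (rule lasso_exc_gen(1)[OF inst qA inj wk m(1)])
      show ?thesis
      proof (cases "m = j")
        case True
        have k1: "\<kappa> m = gp I q j" using True by (simp add: \<kappa>_def)
        have k2: "\<kappa> (m - 1) = 0" if "0 < m" using True that by (simp add: \<kappa>_def)
        have k3: "\<kappa> (n - 1) = gp I q (n - 1)" using j by (simp add: \<kappa>_def)
        have "aexc I t (cf q n \<kappa>) w = gp I q j - gp I q n"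
          unfolding X using k1 k2 k3 gn pe True by simp
        then show ?thesis using j by simp
      next
        case False
        have pn: "p n \<noteq> p m" using pe False by simp
        show ?thesis
        proof (cases "m = 0")
          case True
          then have "\<kappa> m = 0" using False by (simp add: \<kappa>_def)
          then show ?thesis unfolding X using pn True by simp
        next
          case m0: False
          have "arc_gain I (q (m - 1)) * \<kappa> (m - 1) = \<kappa> m"
          proof (cases "j \<le> m - 1")
            case True
            then have "j \<le> m" by simp
            then show ?thesis using True gm m0 by (simp add: \<kappa>_def)
          next
            case c: False
            then have "\<not> j \<le> m" using False by simp
            then show ?thesis using c by (simp add: \<kappa>_def)
          qed
          then show ?thesis unfolding X using pn m0 by simp
        qed
      qed
    qed
  qed
  show "supp (cf q n \<kappa>) = q ` {j..<n}"
  proof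
    show "supp (cf q n \<kappa>) \<subseteq> q ` {j..<n}"
    proof
      fix a assume "a \<in> supp (cf q n \<kappa>)"
      then have pa: "cf q n \<kappa> a > 0" by (simp add: supp_def)
      show "a \<in> q ` {j..<n}"
      proof (rule ccontr)
        assume na: "a \<notin> q ` {j..<n}"
        have "cf q n \<kappa> a = 0" unfolding cf_def
        proof (rule sum.neutral, rule ballI)
          fix i assume "i \<in> {..<n}"
          show "(if q i = a then \<kappa> i else 0) = 0"
          proof (cases "q i = a")
            case True
            then have "\<not> j \<le> i" using na \<open>i \<in> {..<n}\<close> by auto
            then show ?thesis by (simp add: \<kappa>_def)
          qed simp
        qed
        then show False using pa by simp
      qed
    qed
    show "q ` {j..<n} \<subseteq> supp (cf q n \<kappa>)"
    proof
      fix a assume "a \<in> q ` {j..<n}"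
      then obtain i where i: "j \<le> i" "i < n" "q i = a" by auto
      have "\<kappa> i > 0" using i gpp by (simp add: \<kappa>_def)
      then have "cf q n \<kappa> a > 0" using cf_pos[of n \<kappa> i q a] knn i by blast
      then show "a \<in> supp (cf q n \<kappa>)" by (simp add: supp_def)
    qed
  qed
qed


definition good :: "('v,'e) gnf \<Rightarrow> nat \<Rightarrow> ('e \<Rightarrow> real) \<Rightarrow> ('e arc \<Rightarrow> real) \<Rightarrow> bool" where
  "good I t x f \<longleftrightarrow> (\<forall>a. f a \<ge> 0) \<and> (\<forall>a. f a \<noteq> 0 \<longrightarrow> a \<in> res_arcs I t x) \<and>
     (\<forall>w\<in>verts_at I t - {sink I}. aexc I t f w \<ge> 0)"

definition meas :: "('v,'e) gnf \<Rightarrow> nat \<Rightarrow> ('e arc \<Rightarrow> real) \<Rightarrow> nat" where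
  "meas I t f = card (supp f) * (card (verts_at I t - {sink I}) + 1) +
     card {w\<in>verts_at I t - {sink I}. aexc I t f w > 0}"

definition sumh :: "('v,'e) gnf \<Rightarrow> nat \<Rightarrow> ('e \<Rightarrow> real) \<Rightarrow> ('e arc \<Rightarrow> real) \<Rightarrow> real" where
  "sumh I t x f = (\<Sum>w\<in>verts_at I t - {sink I}. aexc I t f w * height I t x w)"

lemma Vfin: "gnf_instance I B dummy \<Longrightarrow> finite (verts_at I t - {sink I})"
  unfolding verts_at_def using inst_facts(1) by auto

lemma supp_res: "\<forall>a. f a \<ge> 0 \<Longrightarrow> \<forall>a. f a \<noteq> 0 \<longrightarrow> a \<in> res_arcs I t x \<Longrightarrow> supp f \<subseteq> res_arcs I t x"
  unfolding supp_def by force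

lemma supp_fin: assumes inst: "gnf_instance I B dummy" and "\<forall>a. f a \<ge> 0" "\<forall>a. f a \<noteq> 0 \<longrightarrow> a \<in> res_arcs I t x"
  shows "finite (supp f)"
proof -
  have "supp f \<subseteq> all_arcs I t" using supp_res[OF assms(2,3)] res_sub by blast
  then show ?thesis using fin_all_arcs[OF inst] by (rule finite_subset)
qed

lemma sub_good:
  assumes g: "good I t x f"
  and g0: "\<forall>a. g a \<ge> 0" and gr: "\<forall>a. g a \<noteq> 0 \<longrightarrow> a \<in> res_arcs I t x"
  and lam: "lm > 0" "\<forall>a\<in>supp g. lm * g a \<le> f a"
  and ex: "\<forall>w\<in>verts_at I t - {sink I}. aexc I t f w - lm * aexc I t g w \<ge> 0"
  shows "good I t x (\<lambda>a. f a - lm * g a)" "supp (\<lambda>a. f a - lm * g a) \<subseteq> supp f"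
proof -
  have f0: "\<forall>a. f a \<ge> 0" and fr: "\<forall>a. f a \<noteq> 0 \<longrightarrow> a \<in> res_arcs I t x" using g unfolding good_def by auto
  have nn: "f a - lm * g a \<ge> 0" for a
  proof (cases "a \<in> supp g")
    case True then show ?thesis using lam by simp
  next
    case False
    then have "g a = 0" using g0 unfolding supp_def by (simp add: not_less) (metis antisym g0)
    then show ?thesis using f0 by simp
  qed
  have rr: "f a - lm * g a \<noteq> 0 \<longrightarrow> a \<in> res_arcs I t x" for a
  proof
    assume "f a - lm * g a \<noteq> 0"
    then have "f a \<noteq> 0 \<or> g a \<noteq> 0" by auto
    then show "a \<in> res_arcs I t x" using fr gr by blast
  qed
  show "good I t x (\<lambda>a. f a - lm * g a)" unfolding good_def aexc_lin using nn rr ex by blast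
  show "supp (\<lambda>a. f a - lm * g a) \<subseteq> supp f"
  proof
    fix a assume "a \<in> supp (\<lambda>a. f a - lm * g a)"
    then have "f a - lm * g a > 0" unfolding supp_def by simp
    moreover have "lm * g a \<ge> 0" using lam(1) g0 by simp
    ultimately show "a \<in> supp f" unfolding supp_def by simp
  qed
qed

lemma step_aug:
  assumes inst: "gnf_instance I B dummy"
  and gf: "good I t x f"
  and u: "u \<in> verts_at I t - {sink I}" "aexc I t f u > 0"
  and g: "aug_path I t x u g" and gs: "supp g \<subseteq> supp f"
  and IH: "\<And>f'. meas I t f' < meas I t f \<Longrightarrow> good I t x f' \<Longrightarrow> sumh I t x f' \<le> aug_cost I t f'"
  shows "sumh I t x f \<le> aug_cost I t f"
proof -
  let ?V = "verts_at I t - {sink I}"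
  have f0: "\<forall>a. f a \<ge> 0" and fr: "\<forall>a. f a \<noteq> 0 \<longrightarrow> a \<in> res_arcs I t x" and fe: "\<forall>w\<in>?V. aexc I t f w \<ge> 0"
    using gf unfolding good_def by auto
  have fa: "frac_aug I t x u g" using g unfolding aug_path_def by blast
  have g0: "\<forall>a. g a \<ge> 0" and gr: "\<forall>a. g a \<noteq> 0 \<longrightarrow> a \<in> res_arcs I t x" using fa unfolding frac_aug_def by auto
  have ge: "\<And>w. w \<in> ?V \<Longrightarrow> aexc I t g w = (if w = u then 1 else 0)" using frac_aug_aexc[OF fa] by blast
  have fsf: "finite (supp f)" using supp_fin[OF inst f0 fr] .
  have fsg: "finite (supp g)" using fsf gs by (rule finite_subset[rotated])
  define M where "M = insert (aexc I t f u) ((\<lambda>a. f a / g a) ` supp g)"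
  have Mf: "finite M" "M \<noteq> {}" unfolding M_def using fsg by auto
  define lam where "lam = Min M"
  have Mpos: "\<forall>m\<in>M. 0 < m"
  proof
    fix m assume "m \<in> M"
    then have "m = aexc I t f u \<or> (\<exists>a\<in>supp g. m = f a / g a)" unfolding M_def by auto
    then show "0 < m"
    proof
      assume "m = aexc I t f u" then show ?thesis using u by simp
    next
      assume "\<exists>a\<in>supp g. m = f a / g a"
      then obtain a where a: "a \<in> supp g" "m = f a / g a" by blast
      have "g a > 0" using a(1) unfolding supp_def by simp
      moreover have "f a > 0" using a(1) gs unfolding supp_def by auto
      ultimately show ?thesis using a(2) by simp
    qed
  qed
  have lpos: "lam > 0" unfolding lam_def using Mf Mpos by (simp add: Min_gr_iff)
  have lle: "lam \<le> m" if "m \<in> M" for m unfolding lam_def using Mf(1) that by (rule Min_le)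
  have lu: "lam \<le> aexc I t f u" using lle unfolding M_def by simp
  have lg: "\<forall>a\<in>supp g. lam * g a \<le> f a"
  proof
    fix a assume a: "a \<in> supp g"
    have "g a > 0" using a unfolding supp_def by simp
    moreover have "lam \<le> f a / g a" using lle a unfolding M_def by simp
    ultimately show "lam * g a \<le> f a" by (simp add: pos_le_divide_eq)
  qed
  have ex: "\<forall>w\<in>?V. aexc I t f w - lam * aexc I t g w \<ge> 0"
  proof
    fix w assume w: "w \<in> ?V"
    show "aexc I t f w - lam * aexc I t g w \<ge> 0"
      using ge[OF w] fe w lu by (cases "w = u") auto
  qed
  define f' where "f' = (\<lambda>a. f a - lam * g a)"
  have gf': "good I t x f'" and ss: "supp f' \<subseteq> supp f"
    unfolding f'_def using sub_good[OF gf g0 gr lpos lg ex] by auto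
  have ef': "aexc I t f' w = aexc I t f w - lam * (if w = u then 1 else 0)" if "w \<in> ?V" for w
    unfolding f'_def aexc_lin using ge[OF that] by simp
  have cs: "card (supp f') \<le> card (supp f)" using ss fsf by (rule card_mono[rotated])
  let ?P = "{w\<in>?V. aexc I t f w > 0}" and ?P' = "{w\<in>?V. aexc I t f' w > 0}"
  have finP: "finite ?P" using Vfin[OF inst] by simp
  have PP: "?P' \<subseteq> ?P"
  proof
    fix w assume "w \<in> ?P'"
    then have w: "w \<in> ?V" "aexc I t f' w > 0" by auto
    have "lam * (if w = u then 1 else 0) \<ge> 0" using lpos by simp
    then show "w \<in> ?P" using ef'[OF w(1)] w by simp
  qed
  have cP: "card ?P' \<le> card (verts_at I t - {sink I})" using Vfin[OF inst] by (intro card_mono) auto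
  have mlt: "meas I t f' < meas I t f"
  proof (cases "lam = aexc I t f u")
    case True
    have "u \<notin> ?P'" using ef'[OF u(1)] True by simp
    moreover have "u \<in> ?P" using u by simp
    ultimately have "?P' \<subset> ?P" using PP by blast
    then have "card ?P' < card ?P" by (rule psubset_card_mono[OF finP])
    moreover have "card (supp f') * (card ?V + 1) \<le> card (supp f) * (card ?V + 1)"
      using cs by (rule mult_le_mono1)
    ultimately show ?thesis unfolding meas_def by simp
  next
    case False
    have "lam \<in> M" unfolding lam_def using Mf by (rule Min_in)
    then obtain a0 where a0: "a0 \<in> supp g" "lam = f a0 / g a0" using False unfolding M_def by auto
    have "g a0 > 0" using a0(1) unfolding supp_def by simp
    then have "f' a0 = 0" unfolding f'_def a0(2) by simp
    then have "a0 \<notin> supp f'" unfolding supp_def by simp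
    moreover have "a0 \<in> supp f" using a0(1) gs by blast
    ultimately have "supp f' \<subset> supp f" using ss by blast
    then have "card (supp f') < card (supp f)" by (rule psubset_card_mono[OF fsf])
    then show ?thesis unfolding meas_def using meas_lt cP by blast
  qed
  have ih: "sumh I t x f' \<le> aug_cost I t f'" using IH[OF mlt gf'] .
  have cst: "aug_cost I t f' = aug_cost I t f - lam * aug_cost I t g" unfolding f'_def by (rule aug_cost_lin)
  have hs: "sumh I t x f = sumh I t x f' + lam * height I t x u"
  proof -
    have "sumh I t x f = (\<Sum>w\<in>?V. aexc I t f' w * height I t x w + (if w = u then lam * height I t x w else 0))"
      unfolding sumh_def by (intro sum.cong refl) (simp add: ef' algebra_simps)
    also have "\<dots> = sumh I t x f' + (\<Sum>w\<in>?V. if w = u then lam * height I t x w else 0)"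
      unfolding sumh_def by (simp add: sum.distrib)
    also have "(\<Sum>w\<in>?V. if w = u then lam * height I t x w else 0) = lam * height I t x u"
      using u(1) Vfin[OF inst] by simp
    finally show ?thesis .
  qed
  have "height I t x u \<le> aug_cost I t g" by (rule height_le[OF inst g])
  then have "lam * height I t x u \<le> lam * aug_cost I t g" using lpos by simp
  then show ?thesis using hs ih cst by simp
qed

lemma step_cyc:
  assumes inst: "gnf_instance I B dummy"
  and gf: "good I t x f"
  and c0: "\<forall>a. c a \<ge> 0" and cr: "\<forall>a. c a \<noteq> 0 \<longrightarrow> a \<in> res_arcs I t x"
  and ce: "\<forall>w. aexc I t c w \<le> 0"
  and cs: "supp c \<subseteq> supp f" and cne: "supp c \<noteq> {}"
  and IH: "\<And>f'. meas I t f' < meas I t f \<Longrightarrow> good I t x f' \<Longrightarrow> sumh I t x f' \<le> aug_cost I t f'"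
  shows "sumh I t x f \<le> aug_cost I t f"
proof -
  let ?V = "verts_at I t - {sink I}"
  have f0: "\<forall>a. f a \<ge> 0" and fr: "\<forall>a. f a \<noteq> 0 \<longrightarrow> a \<in> res_arcs I t x" and fe: "\<forall>w\<in>?V. aexc I t f w \<ge> 0"
    using gf unfolding good_def by auto
  have fsf: "finite (supp f)" using supp_fin[OF inst f0 fr] .
  have fsc: "finite (supp c)" using fsf cs by (rule finite_subset[rotated])
  define M where "M = (\<lambda>a. f a / c a) ` supp c"
  have Mf: "finite M" "M \<noteq> {}" unfolding M_def using fsc cne by auto
  define lam where "lam = Min M"
  have Mpos: "\<forall>m\<in>M. 0 < m"
  proof
    fix m assume "m \<in> M"
    then obtain a where a: "a \<in> supp c" "m = f a / c a" unfolding M_def by blast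
    have "c a > 0" using a(1) unfolding supp_def by simp
    moreover have "f a > 0" using a(1) cs unfolding supp_def by auto
    ultimately show "0 < m" using a(2) by simp
  qed
  have lpos: "lam > 0" unfolding lam_def using Mf Mpos by (simp add: Min_gr_iff)
  have lle: "lam \<le> m" if "m \<in> M" for m unfolding lam_def using Mf(1) that by (rule Min_le)
  have lg: "\<forall>a\<in>supp c. lam * c a \<le> f a"
  proof
    fix a assume a: "a \<in> supp c"
    have "c a > 0" using a unfolding supp_def by simp
    moreover have "lam \<le> f a / c a" using lle a unfolding M_def by simp
    ultimately show "lam * c a \<le> f a" by (simp add: pos_le_divide_eq)
  qed
  have mono: "aexc I t f w \<le> aexc I t f w - lam * aexc I t c w" for w
    using ce lpos by (simp add: mult_nonneg_nonpos)
  have ex: "\<forall>w\<in>?V. aexc I t f w - lam * aexc I t c w \<ge> 0"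
    using fe mono by (meson order_trans)
  define f' where "f' = (\<lambda>a. f a - lam * c a)"
  have gf': "good I t x f'" and ss: "supp f' \<subseteq> supp f"
    unfolding f'_def using sub_good[OF gf c0 cr lpos lg ex] by auto
  have cP: "card {w\<in>?V. aexc I t f' w > 0} \<le> card ?V" using Vfin[OF inst] by (intro card_mono) auto
  have mlt: "meas I t f' < meas I t f"
  proof -
    have "lam \<in> M" unfolding lam_def using Mf by (rule Min_in)
    then obtain a0 where a0: "a0 \<in> supp c" "lam = f a0 / c a0" unfolding M_def by auto
    have "c a0 > 0" using a0(1) unfolding supp_def by simp
    then have "f' a0 = 0" unfolding f'_def a0(2) by simp
    then have "a0 \<notin> supp f'" unfolding supp_def by simp
    moreover have "a0 \<in> supp f" using a0(1) cs by blast
    ultimately have "supp f' \<subset> supp f" using ss by blast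
    then have "card (supp f') < card (supp f)" by (rule psubset_card_mono[OF fsf])
    then show ?thesis unfolding meas_def using meas_lt cP by blast
  qed
  have ih: "sumh I t x f' \<le> aug_cost I t f'" using IH[OF mlt gf'] .
  have cst: "aug_cost I t f' = aug_cost I t f - lam * aug_cost I t c" unfolding f'_def by (rule aug_cost_lin)
  have cc: "aug_cost I t c \<ge> 0" using aug_cost_nonneg[OF inst c0] .
  have "sumh I t x f \<le> sumh I t x f'"
    unfolding sumh_def
  proof (rule sum_mono)
    fix w assume w: "w \<in> ?V"
    have "height I t x w \<ge> 0" using height_nonneg[OF inst w] .
    moreover have "aexc I t f w \<le> aexc I t f' w" unfolding f'_def aexc_lin using mono by simp
    ultimately show "aexc I t f w * height I t x w \<le> aexc I t f' w * height I t x w"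
      by (simp add: mult_right_mono)
  qed
  then show ?thesis using ih cst cc lpos by (smt (verit) mult_nonneg_nonneg)
qed


lemma out_pos:
  assumes inst: "gnf_instance I B dummy" and gf: "good I t x f"
  and v: "v \<in> verts_at I t - {sink I}"
  and h: "aexc I t f v > 0 \<or> (\<exists>a\<in>supp f. ahead I a = v)"
  shows "\<exists>a\<in>supp f. atail I a = v"
proof -
  let ?A = "all_arcs I t"
  let ?Out = "\<Sum>a\<in>{a\<in>?A. atail I a = v}. f a"
  let ?In = "\<Sum>a\<in>{a\<in>?A. ahead I a = v}. arc_gain I a * f a"
  have f0: "\<forall>a. f a \<ge> 0" and fr: "\<forall>a. f a \<noteq> 0 \<longrightarrow> a \<in> res_arcs I t x"
    and fe: "\<forall>w\<in>verts_at I t - {sink I}. aexc I t f w \<ge> 0" using gf unfolding good_def by auto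
  have finA: "finite ?A" by (rule fin_all_arcs[OF inst])
  have tnn: "arc_gain I a * f a \<ge> 0" if "a \<in> ?A" for a
    using arc_gain_pos[OF inst that] f0 by simp
  have Inn: "?In \<ge> 0" by (rule sum_nonneg) (use tnn in auto)
  have ex: "aexc I t f v = ?Out - ?In" unfolding aexc_def ..
  have Opos: "?Out > 0"
    using h
  proof
    assume "aexc I t f v > 0" then show ?thesis using ex Inn by simp
  next
    assume "\<exists>a\<in>supp f. ahead I a = v"
    then obtain a where a: "a \<in> supp f" "ahead I a = v" by blast
    have aA: "a \<in> ?A" using a(1) supp_res[OF f0 fr] res_sub by blast
    have "f a > 0" using a(1) unfolding supp_def by simp
    then have p: "arc_gain I a * f a > 0" using arc_gain_pos[OF inst aA] by simp
    have "arc_gain I a * f a \<le> ?In"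
      by (rule member_le_sum) (use aA a(2) tnn finA in auto)
    then have "?In > 0" using p by simp
    moreover have "aexc I t f v \<ge> 0" using fe v by blast
    ultimately show ?thesis using ex by simp
  qed
  show ?thesis
  proof (rule ccontr)
    assume na: "\<not> (\<exists>a\<in>supp f. atail I a = v)"
    have "?Out = 0"
    proof (rule sum.neutral, rule ballI)
      fix a assume a: "a \<in> {a\<in>?A. atail I a = v}"
      show "f a = 0"
      proof (rule ccontr)
        assume "f a \<noteq> 0"
        then have "f a > 0" using f0 by (simp add: order_le_neq_trans)
        then have "a \<in> supp f" unfolding supp_def by simp
        then show False using na a by blast
      qed
    qed
    then show False using Opos by simp
  qed
qed

lemma G:
  assumes inst: "gnf_instance I B dummy"
  shows "good I t x f \<Longrightarrow> sumh I t x f \<le> aug_cost I t f"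
proof (induction "meas I t f" arbitrary: f rule: less_induct)
  case less
  let ?V = "verts_at I t - {sink I}"
  have gf: "good I t x f" by fact
  have IH: "\<And>f'. meas I t f' < meas I t f \<Longrightarrow> good I t x f' \<Longrightarrow> sumh I t x f' \<le> aug_cost I t f'"
    using less.hyps by blast
  have f0: "\<forall>a. f a \<ge> 0" and fr: "\<forall>a. f a \<noteq> 0 \<longrightarrow> a \<in> res_arcs I t x"
    and fe: "\<forall>w\<in>?V. aexc I t f w \<ge> 0" using gf unfolding good_def by auto
  show ?case
  proof (cases "\<exists>u\<in>?V. aexc I t f u > 0")
    case False
    have z: "aexc I t f w = 0" if "w \<in> ?V" for w
    proof -
      have "aexc I t f w \<ge> 0" using fe that by blast
      moreover have "\<not> aexc I t f w > 0" using False that by blast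
      ultimately show ?thesis by simp
    qed
    have "sumh I t x f = 0" unfolding sumh_def by (rule sum.neutral) (use z in simp)
    then show ?thesis using aug_cost_nonneg[OF inst f0] by simp
  next
    case True
    then obtain u where u: "u \<in> ?V" "aexc I t f u > 0" by blast
    have succ: "\<forall>v\<in>?V. (v = u \<or> (\<exists>a\<in>supp f. ahead I a = v)) \<longrightarrow> (\<exists>a\<in>supp f. atail I a = v)"
    proof (intro ballI impI)
      fix v assume v: "v \<in> ?V" and h: "v = u \<or> (\<exists>a\<in>supp f. ahead I a = v)"
      have "aexc I t f v > 0 \<or> (\<exists>a\<in>supp f. ahead I a = v)" using h u by blast
      then show "\<exists>a\<in>supp f. atail I a = v" by (rule out_pos[OF inst gf v])
    qed
    have sr: "supp f \<subseteq> res_arcs I t x" by (rule supp_res[OF f0 fr])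
    have heads: "\<forall>a\<in>supp f. atail I a \<in> ?V \<longrightarrow> ahead I a \<in> ?V \<or> ahead I a = sink I"
    proof (intro ballI impI)
      fix a assume "a \<in> supp f"
      then have "a \<in> all_arcs I t" using sr res_sub by blast
      then have "ahead I a \<in> verts_at I t" using arc_ends[OF inst] by blast
      then show "ahead I a \<in> ?V \<or> ahead I a = sink I" by blast
    qed
    obtain n p q where w: "0 < n" "p 0 = u" "\<forall>i<n. p i \<in> ?V" "inj_on p {..<n}" "\<forall>i<n. q i \<in> supp f"
        "\<forall>i<n. atail I (q i) = p i \<and> ahead I (q i) = p (Suc i)" "p n = sink I \<or> (\<exists>j<n. p n = p j)"
      using greedy_walk[OF Vfin[OF inst] u(1) _ succ heads] by blast
    have qr: "\<forall>i<n. q i \<in> res_arcs I t x" using w(5) sr by blast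
    have qA: "\<forall>i<n. q i \<in> all_arcs I t" using qr res_sub by blast
    have qs: "q ` {..<n} \<subseteq> supp f" using w(5) by blast
    show ?thesis
    proof (cases "p n = sink I")
      case True
      have "aug_path I t x (p 0) (cf q n (\<lambda>i. gp I q i * (if n \<le> i then 1 else 1))) \<and>
            supp (cf q n (\<lambda>i. gp I q i * (if n \<le> i then 1 else 1))) = q ` {..<n}"
        by (rule lasso_aug[OF inst w(1) w(3) w(4) qr w(6)]) (use True in simp)
      then show ?thesis using step_aug[OF inst gf u _ _ IH] w(2) qs by auto
    next
      case False
      then obtain j where j: "j < n" "p n = p j" using w(7) by blast
      show ?thesis
      proof (cases "gp I q n < gp I q j")
        case True
        define r where "r = 1 / (1 - gp I q n / gp I q j)"
        have "aug_path I t x (p 0) (cf q n (\<lambda>i. gp I q i * (if j \<le> i then r else 1))) \<and>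
            supp (cf q n (\<lambda>i. gp I q i * (if j \<le> i then r else 1))) = q ` {..<n}"
          by (rule lasso_aug[OF inst w(1) w(3) w(4) qr w(6)]) (use True j r_def in simp)
        then show ?thesis using step_aug[OF inst gf u _ _ IH] w(2) qs by auto
      next
        case False
        then have ge: "gp I q j \<le> gp I q n" by simp
        define c where "c = cf q n (\<lambda>i. if j \<le> i then gp I q i else 0)"
        have ce: "\<forall>w. aexc I t c w \<le> 0" and cs: "supp c = q ` {j..<n}" and c0: "\<forall>a. c a \<ge> 0"
          unfolding c_def using cycle_flow[OF inst qA w(4) w(6) j ge] by auto
        have css: "supp c \<subseteq> supp f" using cs qs by auto
        have cne: "supp c \<noteq> {}" using cs j by auto
        have cr: "\<forall>a. c a \<noteq> 0 \<longrightarrow> a \<in> res_arcs I t x"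
        proof (intro allI impI)
          fix a assume "c a \<noteq> 0"
          then have "c a > 0" using c0 by (simp add: order_le_neq_trans)
          then have "a \<in> supp c" unfolding supp_def by simp
          then show "a \<in> res_arcs I t x" using css sr by blast
        qed
        show ?thesis by (rule step_cyc[OF inst gf c0 cr ce css cne IH])
      qed
    qed
  qed
qed


lemma edges_at_T[simp]: "edges_at I (horizon I) = edges I"
  unfolding edges_at_def by auto
lemma verts_at_T[simp]: "verts_at I (horizon I) = verts I"
  unfolding verts_at_def by auto

lemma ereal0_le: "0 < (c::ereal) \<Longrightarrow> ereal 0 \<le> c"
  by (metis less_imp_le zero_ereal_def)

definition Inv :: "('v,'e) gnf \<Rightarrow> nat \<Rightarrow> ('e \<Rightarrow> real) \<Rightarrow> bool" where
  "Inv I t x \<longleftrightarrow> (\<forall>e. e \<notin> edges_at I t \<longrightarrow> x e = 0) \<and>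
     (\<forall>e\<in>edges I. 0 \<le> x e \<and> ereal (x e) \<le> cap I e) \<and>
     (\<forall>v\<in>verts I - {sink I}. excess I (horizon I) x v \<le> demand I t v)"

lemma excess_restrict:
  assumes inst: "gnf_instance I B dummy" and z: "\<forall>e. e \<notin> edges_at I t \<longrightarrow> x e = 0"
  shows "excess I (horizon I) x v = excess I t x v"
proof -
  have fin: "finite (edges I)" using inst_facts(2)[OF inst] .
  have s1: "(\<Sum>e\<in>{e\<in>edges I. etail I e = v}. x e) = (\<Sum>e\<in>{e\<in>edges_at I t. etail I e = v}. x e)"
    by (rule sum.mono_neutral_right) (use fin edges_at_sub[of I t] z in auto)
  have s2: "(\<Sum>e\<in>{e\<in>edges I. ehead I e = v}. gain I e * x e) = (\<Sum>e\<in>{e\<in>edges_at I t. ehead I e = v}. gain I e * x e)"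
    by (rule sum.mono_neutral_right) (use fin edges_at_sub[of I t] z in auto)
  show ?thesis unfolding excess_def edges_at_T s1 s2 ..
qed

lemma no_in_src:
  assumes inst: "gnf_instance I B dummy" and "s \<in> src I ` {1..horizon I}"
  shows "{e\<in>edges_at I t. ehead I e = s} = {}"
  using assms edges_at_sub[of I t] inst_facts(9)[OF inst] by blast

lemma step_inv:
  assumes inst: "gnf_instance I B dummy" and t: "t \<in> {1..horizon I}"
  and inv: "Inv I t x" and st: "alg_step I t x x'"
  shows "Inv I t x'"
proof -
  obtain f \<theta> where ap: "aug_path I t x (src I t) f" and fs: "feasible_step I t x f \<theta>"
    and x': "x' = augment I x f \<theta>" using st unfolding alg_step_def by blast
  have fa: "frac_aug I t x (src I t) f" using ap unfolding aug_path_def by blast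
  have fr: "\<forall>a. f a \<noteq> 0 \<longrightarrow> a \<in> res_arcs I t x" using fa unfolding frac_aug_def by blast
  have z: "\<forall>e. e \<notin> edges_at I t \<longrightarrow> x e = 0" and cp: "\<forall>e\<in>edges I. 0 \<le> x e \<and> ereal (x e) \<le> cap I e"
    and dm: "\<forall>v\<in>verts I - {sink I}. excess I (horizon I) x v \<le> demand I t v"
    using inv unfolding Inv_def by auto
  have z': "\<forall>e. e \<notin> edges_at I t \<longrightarrow> x' e = 0"
  proof (intro allI impI)
    fix e assume e: "e \<notin> edges_at I t"
    have "Fw e \<notin> res_arcs I t x" "Bw e \<notin> res_arcs I t x" using e unfolding res_arcs_def by auto
    then have "f (Fw e) = 0" "f (Bw e) = 0" using fr by blast+
    then show "x' e = 0" using z e unfolding x' augment_def by simp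
  qed
  have cp': "\<forall>e\<in>edges I. 0 \<le> x' e \<and> ereal (x' e) \<le> cap I e"
  proof
    fix e assume e: "e \<in> edges I"
    show "0 \<le> x' e \<and> ereal (x' e) \<le> cap I e"
    proof (cases "e \<in> edges_at I t")
      case True
      then show ?thesis using fs unfolding feasible_step_def x' by blast
    next
      case False
      then have "x' e = 0" using z' by blast
      moreover have "cap I e > 0" using inst_facts(10)[OF inst e] by blast
      ultimately show ?thesis using ereal0_le by simp
    qed
  qed
  have ts: "src I t \<in> src I ` {1..horizon I}" using t by blast
  have dm': "\<forall>v\<in>verts I - {sink I}. excess I (horizon I) x' v \<le> demand I t v"
  proof
    fix v assume v: "v \<in> verts I - {sink I}"
    have e1: "excess I (horizon I) x' v = excess I t x' v" by (rule excess_restrict[OF inst z'])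
    show "excess I (horizon I) x' v \<le> demand I t v"
    proof (cases "v = src I t")
      case True
      have "excess I t x' v = outflow I t x' (src I t)"
        unfolding excess_def outflow_def True no_in_src[OF inst ts] by simp
      also have "\<dots> \<le> 1" using fs unfolding feasible_step_def x' by blast
      also have "\<dots> = demand I t v" unfolding demand_def True using t by auto
      finally show ?thesis using e1 by simp
    next
      case False
      show ?thesis
      proof (cases "v \<in> verts_at I t")
        case True
        then have vv: "v \<in> verts_at I t - {sink I}" using v by blast
        have "aexc I t f v = 0" using frac_aug_aexc[OF fa vv] False by simp
        then have "excess I t x' v = excess I t x v" unfolding x' excess_augment[OF inst] by simp
        also have "\<dots> = excess I (horizon I) x v" by (rule excess_restrict[OF inst z, symmetric])
        also have "\<dots> \<le> demand I t v" using dm v by blast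
        finally show ?thesis using e1 by simp
      next
        case False
        then obtain t' where t': "t' \<in> {t<..horizon I}" "v = src I t'" using v unfolding verts_at_def by blast
        have "t' \<in> {1..horizon I}" using t' by auto
        then have s: "v \<in> src I ` {1..horizon I}" using t' by blast
        have o: "{e\<in>edges_at I t. etail I e = v} = {}" unfolding edges_at_def using t' by auto
        have "excess I t x' v = 0" unfolding excess_def o no_in_src[OF inst s] by simp
        moreover have "demand I t v \<ge> 0" unfolding demand_def by simp
        ultimately show ?thesis using e1 by simp
      qed
    qed
  qed
  show ?thesis unfolding Inv_def using z' cp' dm' by blast
qed

lemma phase_inv:
  assumes inst: "gnf_instance I B dummy" and t: "t \<in> {1..horizon I}"
  shows "(alg_step I t)\<^sup>*\<^sup>* x x' \<Longrightarrow> Inv I t x \<Longrightarrow> Inv I t x'"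
proof (induction rule: rtranclp_induct)
  case base then show ?case .
next
  case (step y z)
  then show ?case using step_inv[OF inst t] by blast
qed

lemma inv_mono:
  assumes "Inv I t x" "t \<le> t'"
  shows "Inv I t' x"
proof -
  have "src I ` {t'<..horizon I} \<subseteq> src I ` {t<..horizon I}" using assms(2) by auto
  then have ee: "edges_at I t \<subseteq> edges_at I t'" unfolding edges_at_def by auto
  have "src I ` {1..t} \<subseteq> src I ` {1..t'}" using assms(2) by auto
  then have dd: "demand I t v \<le> demand I t' v" for v unfolding demand_def by auto
  show ?thesis using assms(1) ee dd unfolding Inv_def by (meson order_trans subsetD)
qed

lemma run_inv:
  assumes inst: "gnf_instance I B dummy" and run: "alg_run I xs"
  shows "t \<le> horizon I \<Longrightarrow> Inv I t (xs t)"
proof (induction t)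
  case 0
  have "xs 0 = (\<lambda>_. 0)" using run unfolding alg_run_def by blast
  moreover have "\<forall>e\<in>edges I. cap I e > 0" using inst_facts(10)[OF inst] by blast
  ultimately show ?case unfolding Inv_def excess_def demand_def using ereal0_le by auto
next
  case (Suc k)
  have t: "Suc k \<in> {1..horizon I}" using Suc.prems by simp
  have ph: "alg_phase I (Suc k) (xs k) (xs (Suc k))" using run t unfolding alg_run_def by fastforce
  have "Inv I (Suc k) (xs k)" using inv_mono[OF Suc.IH] Suc.prems by simp
  then show ?case using phase_inv[OF inst t] ph unfolding alg_phase_def by blast
qed


lemma ereal_div_le:
  assumes c: "(c::real) > 0" and y: "ereal y \<le> C / ereal c"
  shows "ereal (c * y) \<le> C"
proof (cases C)
  case (real r)
  then have "y \<le> r / c" using y c by simp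
  then have "c * y \<le> r" using c by (simp add: pos_le_divide_eq mult.commute)
  then show ?thesis using real by simp
next
  case PInf then show ?thesis by simp
next
  case MInf then show ?thesis using y c by simp
qed

lemma ereal_div_nonneg:
  assumes c: "(c::real) > 0" and C: "0 < C"
  shows "ereal 0 \<le> C / ereal c"
proof (cases C)
  case (real r)
  then have "r > 0" using C by simp
  then show ?thesis using real c by simp
next
  case PInf then show ?thesis using c by simp
next
  case MInf then show ?thesis using C by simp
qed

lemma excess_cong: "(\<forall>e\<in>edges_at I t. x e = x' e) \<Longrightarrow> excess I t x w = excess I t x' w"
  unfolding excess_def by (intro arg_cong2[where f=minus] sum.cong) auto

lemma valid_nonempty:
  assumes inst: "gnf_instance I B dummy" and c: "(c::real) > 0"
  shows "{y. valid_flow I (horizon I) (\<lambda>e. cap I e / ereal c) y} \<noteq> {}"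
proof -
  let ?S = "src I ` {1..horizon I}"
  define y0 where "y0 e = (if e \<in> dummy ` ?S then 1 else 0 :: real)" for e
  have SV: "?S \<subseteq> verts I - {sink I}" by (rule image_subsetI) (use inst_facts(8)[OF inst] in auto)
  have dS: "dummy v \<in> edges I \<and> etail I (dummy v) = v \<and> ehead I (dummy v) = sink I \<and> cap I (dummy v) = \<infinity>"
    if "v \<in> ?S" for v using inst_facts(11)[OF inst] SV that by blast
  have "valid_flow I (horizon I) (\<lambda>e. cap I e / ereal c) y0"
    unfolding valid_flow_def edges_at_T verts_at_T
  proof (intro conjI ballI)
    fix e assume e: "e \<in> edges I"
    show "0 \<le> y0 e" unfolding y0_def by simp
    show "ereal (y0 e) \<le> cap I e / ereal c"
    proof (cases "e \<in> dummy ` ?S")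
      case True
      then obtain v where "v \<in> ?S" "e = dummy v" by blast
      then have "cap I e = \<infinity>" using dS by blast
      then show ?thesis using c by simp
    next
      case False
      then have "y0 e = 0" unfolding y0_def by simp
      then show ?thesis using ereal_div_nonneg[OF c] inst_facts(10)[OF inst e] by simp
    qed
  next
    fix w assume w: "w \<in> verts I - {sink I}"
    have i0: "(\<Sum>e\<in>{e\<in>edges I. ehead I e = w}. gain I e * y0 e) = 0"
    proof (rule sum.neutral, rule ballI)
      fix e assume e: "e \<in> {e\<in>edges I. ehead I e = w}"
      have "e \<notin> dummy ` ?S" using e w dS by auto
      then show "gain I e * y0 e = 0" unfolding y0_def by simp
    qed
    have o: "(\<Sum>e\<in>{e\<in>edges I. etail I e = w}. y0 e) = (if w \<in> ?S then 1 else 0)"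
    proof (cases "w \<in> ?S")
      case True
      have "(\<Sum>e\<in>{e\<in>edges I. etail I e = w}. y0 e) = (\<Sum>e\<in>{e\<in>edges I. etail I e = w}. if e = dummy w then 1 else 0)"
      proof (rule sum.cong[OF refl])
        fix e assume e: "e \<in> {e\<in>edges I. etail I e = w}"
        have "e \<in> dummy ` ?S \<longleftrightarrow> e = dummy w" using e dS True by auto
        then show "y0 e = (if e = dummy w then 1 else 0)" unfolding y0_def by simp
      qed
      also have "\<dots> = 1" using dS[OF True] inst_facts(2)[OF inst] by simp
      finally show ?thesis using True by simp
    next
      case False
      have "(\<Sum>e\<in>{e\<in>edges I. etail I e = w}. y0 e) = 0"
      proof (rule sum.neutral, rule ballI)
        fix e assume e: "e \<in> {e\<in>edges I. etail I e = w}"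
        have "e \<notin> dummy ` ?S" using e False dS by auto
        then show "y0 e = 0" unfolding y0_def by simp
      qed
      then show ?thesis using False by simp
    qed
    show "excess I (horizon I) y0 w = demand I (horizon I) w"
      unfolding excess_def edges_at_T o i0 demand_def by simp
  qed
  then show ?thesis by blast
qed

lemma key:
  assumes inst: "gnf_instance I B dummy" and inv: "Inv I (horizon I) x" and eps: "\<epsilon> > 0"
  and yv: "valid_flow I (horizon I) (\<lambda>e. cap I e / ereal (1 + \<epsilon>)) y"
  shows "\<epsilon> * (\<Sum>t=1..horizon I. height I (horizon I) x (src I t)) \<le> (1 + \<epsilon>) * flow_cost I (horizon I) y"
proof -
  let ?T = "horizon I"
  let ?V = "verts I - {sink I}"
  let ?S = "src I ` {1..?T}"
  have x0: "\<forall>e\<in>edges I. 0 \<le> x e \<and> ereal (x e) \<le> cap I e"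
    and xd: "\<forall>v\<in>?V. excess I ?T x v \<le> demand I ?T v" using inv unfolding Inv_def by auto
  have y0: "\<forall>e\<in>edges I. 0 \<le> y e \<and> ereal (y e) \<le> cap I e / ereal (1 + \<epsilon>)"
    and yd: "\<forall>v\<in>?V. excess I ?T y v = demand I ?T v"
    using yv unfolding valid_flow_def by auto
  have gp: "\<And>e. e \<in> edges I \<Longrightarrow> gain I e > 0" using inst_facts(10)[OF inst] by blast
  define d where "d e = (1 + \<epsilon>) * y e - x e" for e
  define g where "g a = (case a of Fw e \<Rightarrow> (if e \<in> edges I \<and> d e > 0 then d e else 0)
                     | Bw e \<Rightarrow> (if e \<in> edges I \<and> d e < 0 then - d e * gain I e else 0))" for a
  have gF: "g (Fw e) = (if e \<in> edges I \<and> d e > 0 then d e else 0)" for e unfolding g_def by simp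
  have gB: "g (Bw e) = (if e \<in> edges I \<and> d e < 0 then - d e * gain I e else 0)" for e unfolding g_def by simp
  have g0: "\<forall>a. g a \<ge> 0"
  proof
    fix a show "g a \<ge> 0"
    proof (cases a)
      case (Fw e) then show ?thesis using gF by simp
    next
      case (Bw e)
      show ?thesis
      proof (cases "e \<in> edges I \<and> d e < 0")
        case True
        then have "- d e \<ge> 0" "gain I e \<ge> 0" using gp[of e] by auto
        then have "- d e * gain I e \<ge> 0" by (rule mult_nonneg_nonneg)
        then show ?thesis using Bw True gB by simp
      next
        case nf: False
        have "g (Bw e) = 0" unfolding gB using nf by (simp only: if_False)
        then show ?thesis using Bw by simp
      qed
    qed
  qed
  have gr: "\<forall>a. g a \<noteq> 0 \<longrightarrow> a \<in> res_arcs I ?T x"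
  proof (intro allI impI)
    fix a assume a: "g a \<noteq> 0"
    show "a \<in> res_arcs I ?T x"
    proof (cases a)
      case (Fw e)
      then have e: "e \<in> edges I" "d e > 0" using a gF by (auto split: if_splits)
      have "ereal ((1 + \<epsilon>) * y e) \<le> cap I e" using ereal_div_le[of "1 + \<epsilon>"] y0 e(1) eps by simp
      moreover have "x e < (1 + \<epsilon>) * y e" using e(2) unfolding d_def by simp
      moreover have "ereal (x e) < ereal ((1 + \<epsilon>) * y e)" using calculation(2) by simp
      ultimately have "ereal (x e) < cap I e" using less_le_trans by blast
      then show ?thesis using Fw e unfolding res_arcs_def by simp
    next
      case (Bw e)
      then have e: "e \<in> edges I" "d e < 0" using a gB by (auto split: if_splits)
      have "(1 + \<epsilon>) * y e \<ge> 0" using y0 e(1) eps by simp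
      then have "x e > 0" using e(2) unfolding d_def by simp
      then show ?thesis using Bw e unfolding res_arcs_def by simp
    qed
  qed
  have gd: "g (Fw e) - g (Bw e) / gain I e = d e" if "e \<in> edges I" for e
    using gp[OF that] that unfolding gF gB by auto
  have ae: "aexc I ?T g w \<ge> \<epsilon> * demand I ?T w" if w: "w \<in> ?V" for w
  proof -
    have "aexc I ?T g w = excess I ?T d w"
      unfolding aexc_eq_excess[OF inst] by (rule excess_cong) (use gd in simp)
    also have "\<dots> = (1 + \<epsilon>) * excess I ?T y w - excess I ?T x w"
      unfolding d_def by (rule excess_diff)
    also have "\<dots> \<ge> (1 + \<epsilon>) * demand I ?T w - demand I ?T w" using yd xd w by simp
    finally show ?thesis by (simp add: algebra_simps)
  qed
  have dnn: "demand I ?T w \<ge> 0" for w unfolding demand_def by simp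
  have good: "good I ?T x g" unfolding good_def verts_at_T
  proof (intro conjI ballI)
    show "\<forall>a. g a \<ge> 0" by (rule g0)
    show "\<forall>a. g a \<noteq> 0 \<longrightarrow> a \<in> res_arcs I ?T x" by (rule gr)
    fix w assume w: "w \<in> ?V"
    have "\<epsilon> * demand I ?T w \<ge> 0" using eps dnn by simp
    then show "aexc I ?T g w \<ge> 0" using ae[OF w] by linarith
  qed
  have G1: "sumh I ?T x g \<le> aug_cost I ?T g" by (rule G[OF inst good])
  have finV: "finite ?V" using inst_facts(1)[OF inst] by simp
  have SV: "?S \<subseteq> ?V" by (rule image_subsetI) (use inst_facts(8)[OF inst] in auto)
  have lower: "\<epsilon> * (\<Sum>t=1..?T. height I ?T x (src I t)) \<le> sumh I ?T x g"
  proof -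
    have hn: "height I ?T x w \<ge> 0" if "w \<in> ?V" for w using height_nonneg[OF inst, of w] that by simp
    have "(\<Sum>t=1..?T. height I ?T x (src I t)) = (\<Sum>w\<in>?S. height I ?T x w)"
      using sum.reindex[OF inst_facts(7)[OF inst], of "height I ?T x"] by simp
    also have "\<dots> = (\<Sum>w\<in>?V \<inter> ?S. height I ?T x w)" using SV by (simp add: Int_absorb1)
    also have "\<dots> = (\<Sum>w\<in>?V. if w \<in> ?S then height I ?T x w else 0)"
      by (rule sum.inter_restrict[OF finV])
    also have "\<dots> = (\<Sum>w\<in>?V. demand I ?T w * height I ?T x w)"
      by (rule sum.cong) (auto simp: demand_def)
    finally have eq: "(\<Sum>t=1..?T. height I ?T x (src I t)) = (\<Sum>w\<in>?V. demand I ?T w * height I ?T x w)" .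
    have "\<epsilon> * (\<Sum>w\<in>?V. demand I ?T w * height I ?T x w) = (\<Sum>w\<in>?V. (\<epsilon> * demand I ?T w) * height I ?T x w)"
      by (simp add: sum_distrib_left mult.assoc)
    also have "\<dots> \<le> (\<Sum>w\<in>?V. aexc I ?T g w * height I ?T x w)"
      by (rule sum_mono) (use ae hn in \<open>simp add: mult_right_mono\<close>)
    also have "\<dots> = sumh I ?T x g" unfolding sumh_def by simp
    finally show ?thesis using eq by simp
  qed
  have upper: "aug_cost I ?T g \<le> (1 + \<epsilon>) * flow_cost I ?T y"
  proof -
    have fin: "finite (edges I)" using inst_facts(2)[OF inst] .
    have aa: "all_arcs I ?T = Fw ` edges I \<union> Bw ` edges I" unfolding all_arcs_def by simp
    have "aug_cost I ?T g = (\<Sum>e\<in>edges I. cst I e * g (Fw e)) + (\<Sum>e\<in>edges I. 0 * g (Bw e))"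
      unfolding aug_cost_def aa using fin
      by (subst sum.union_disjoint) (auto simp: sum.reindex inj_on_def)
    also have "\<dots> = (\<Sum>e\<in>edges I. cst I e * g (Fw e))" by simp
    also have "\<dots> \<le> (\<Sum>e\<in>edges I. cst I e * ((1 + \<epsilon>) * y e))"
    proof (rule sum_mono)
      fix e assume e: "e \<in> edges I"
      have c: "cst I e > 0" using inst_facts(10)[OF inst e] by blast
      have "g (Fw e) \<le> (1 + \<epsilon>) * y e"
        using x0 y0 e eps unfolding gF d_def by auto
      then show "cst I e * g (Fw e) \<le> cst I e * ((1 + \<epsilon>) * y e)" using c by simp
    qed
    also have "\<dots> = (1 + \<epsilon>) * flow_cost I ?T y"
      unfolding flow_cost_def edges_at_T by (simp add: sum_distrib_left algebra_simps)
    finally show ?thesis .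
  qed
  show ?thesis using lower G1 upper by linarith
qed


theorem lemma4:
  fixes I :: "('v,'e) gnf" and B :: real and dummy :: "'v \<Rightarrow> 'e"
    and xs :: "nat \<Rightarrow> 'e \<Rightarrow> real" and \<epsilon> :: real
  assumes "gnf_instance I B dummy"
    and "alg_run I xs"
    and "\<epsilon> > 0"
  shows "(\<Sum>t=1..horizon I. height I (horizon I) (xs (horizon I)) (src I t))
         \<le> (1 + \<epsilon>) / \<epsilon> *
           min_flow_cost I (horizon I) (\<lambda>e. cap I e / ereal (1 + \<epsilon>))"
proof -
  let ?T = "horizon I"
  let ?x = "xs ?T"
  let ?S = "flow_cost I ?T ` {y. valid_flow I ?T (\<lambda>e. cap I e / ereal (1 + \<epsilon>)) y}"
  let ?P = "\<Sum>t=1..horizon I. height I (horizon I) (xs (horizon I)) (src I t)"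
  have inv: "Inv I ?T ?x" using run_inv[OF assms(1) assms(2)] by simp
  have k: "\<epsilon> * ?P \<le> (1 + \<epsilon>) * flow_cost I ?T y"
    if "valid_flow I ?T (\<lambda>e. cap I e / ereal (1 + \<epsilon>)) y" for y
    using key[OF assms(1) inv assms(3) that] .
  have ne: "?S \<noteq> {}" using valid_nonempty[OF assms(1), of "1 + \<epsilon>"] assms(3) by auto
  have low: "\<epsilon> / (1 + \<epsilon>) * ?P \<le> Inf ?S"
  proof (rule cInf_greatest[OF ne])
    fix c assume "c \<in> ?S"
    then obtain y where y: "valid_flow I ?T (\<lambda>e. cap I e / ereal (1 + \<epsilon>)) y" "c = flow_cost I ?T y" by blast
    have "\<epsilon> * ?P \<le> (1 + \<epsilon>) * c" using k[OF y(1)] y(2) by simp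
    moreover have "1 + \<epsilon> > 0" using assms(3) by simp
    ultimately show "\<epsilon> / (1 + \<epsilon>) * ?P \<le> c" by (simp add: pos_divide_le_eq mult.commute)
  qed
  have pos: "(1 + \<epsilon>) / \<epsilon> \<ge> 0" using assms(3) by simp
  have "(1 + \<epsilon>) / \<epsilon> * (\<epsilon> / (1 + \<epsilon>) * ?P) \<le> (1 + \<epsilon>) / \<epsilon> * Inf ?S"
    using low pos by (rule mult_left_mono)
  moreover have "(1 + \<epsilon>) / \<epsilon> * (\<epsilon> / (1 + \<epsilon>) * ?P) = ?P"
  proof -
    have ne1: "1 + \<epsilon> \<noteq> 0" "\<epsilon> \<noteq> 0" using assms(3) by auto
    have "(1 + \<epsilon>) / \<epsilon> * (\<epsilon> / (1 + \<epsilon>)) = 1" using ne1 by simp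
    then show ?thesis by (simp only: mult.assoc[symmetric])
  qed
  ultimately show ?thesis unfolding min_flow_cost_def by simp
qed

end
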